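(* Let $N\ge2$, let $j\in\{1,\dots,N\}$ be such that $m_j=1$, and let $m_i\ge2$ for all $i\ne j$. Suppose Assumptions A1 and A2 hold, the game has a (finite) Nash equilibrium $\mathbf x^*$, and for each $i\ne j$ and $k\in\{1,\dots,m_i\}$ the interference graph $\mathcal G_I^i$ and the interference-to-$k$ communication graph $\mathcal G_{C_k}^i$ are undirected and connected. (For coalition $j$ the seeking dynamics reduce to $\dot x_{j1}=-d_{j1}\,\partial f_{j1}(\mathbf x)/\partial x_{j1}$.) Then for each pair of positive constants $(\Delta,v)$ there exists $\delta^*(\Delta,v)>0$ such that for each $\delta\in(0,\delta^* )$, every solution of the seeking dynamics with $\|\chi_{-j}(0)\|<\Delta$ satisfies $$\|\chi_{-j}(t)\|\le\phi(\|\chi_{-j}(0)\|,\delta t)+v\quad\text{for all }t\ge0,$$ where $\phi$ is a class-$\mathcal{KL}$ function.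
   Context: Let $N\ge1$ and $m_i\ge1$ ($i=1,\dots,N$) be integers. Agent $j$ of coalition $i$ ($j\in\{1,\dots,m_i\}$) has action $x_{ij}\in\mathbb R$; $\mathbf x_i=(x_{i1},\dots,x_{im_i})^T$, $\mathbf x=(\mathbf x_1^T,\dots,\mathbf x_N^T)^T\in\mathbb R^{M}$ with $M=\sum_i m_i$, and $\mathbf x_{-i}$ denotes $\mathbf x$ with block $\mathbf x_i$ removed. Agent $j$ of coalition $i$ has a local cost $f_{ij}:\mathbb R^M\to\mathbb R$, and coalition $i$ has cost $f_i=\sum_{j=1}^{m_i}f_{ij}$. A Nash equilibrium is $\mathbf x^*$ with $f_i(\mathbf x_i^*,\mathbf x_{-i}^* )\le f_i(\mathbf x_i,\mathbf x_{-i}^* )$ for all $\mathbf x_i\in\mathbb R^{m_i}$ and all $i$. Pseudo-gradient: $\mathcal P(\mathbf x)=((\partial f_1/\partial\mathbf x_1)^T,\dots,(\partial f_N/\partial\mathbf x_N)^T)^T$. Assumption A1: every $f_{ij}$ is $\mathcal C^2$. Assumption A2: $(\mathbf x-\mathbf y)^T(\mathcal P(\mathbf x)-\mathcal P(\mathbf y))>0$ for all distinct $\mathbf x,\mathbf y\in\mathbb R^M$. Interference graph $\mathcal G_I^i$: the undirected graph on vertex set $\{1,\dots,m_i\}$ in which distinct $j,k$ are adjacent iff $f_{ij}$ depends explicitly on $x_{ik}$ or $f_{ik}$ depends explicitly on $x_{ij}$; $\mathcal N_{Ik}^i$ is the neighbor set of $k$ in $\mathcal G_I^i$ and $N_{Ik}^i=|\mathcal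 N_{Ik}^i|$. In particular $\partial f_{ij}/\partial x_{ik}\equiv0$ whenever $j\notin\mathcal N_{Ik}^i\cup\{k\}$. Communication graph $\mathcal G_C^i$: an undirected weighted graph on $\{1,\dots,m_i\}$ with adjacency matrix $(a_i^{jl})$, $a_i^{jl}=a_i^{lj}\ge0$, $a_i^{jj}=0$. The interference-to-$k$ communication graph $\mathcal G_{C_k}^i$ is the subgraph of $\mathcal G_C^i$ induced on the vertex set $\mathcal N_{Ik}^i\cup\{k\}$ (with inherited weights); its Laplacian is $L_{C_k}^i$ and its number of vertices is $N_{C_k^i}=N_{Ik}^i+1$. Seeking dynamics: fix $\delta>0$ and positive constants $\bar d_{ij}$, set $d_{ij}=\delta\bar d_{ij}$. For all $i,j$: $\dot x_{ij}=-d_{ij}\,g_{ijj}$, and for each $k\in\mathcal N_{Ij}^i\cup\{j\}$: $\dot w_{ijk}=-\sum_{l\in\mathcal N_{Ik}^i\cup\{k\}}a_i^{jl}(g_{ijk}-g_{ilk})$, $g_{ijk}=w_{ijk}+\partial f_{ij}(\mathbf x)/\partial x_{ik}$, with initial conditions $w_{ijk}(0)=0$ and $\mathbf x(0)$ arbitrary. Error coordinates: $G_{ik}$ is the vector of $g_{ijk}$ over $j\in\mathcal N_{Ik}^i\cup\{k\}$; $R_{ik}\in\mathbb R^{N_{C_k^i}\times(N_{C_k^i}-1)}$ is any matrix such that $[\mathbf 1_{N_{C_k^i}}/\sqrt{N_{C_k^i}}\ \ R_{ik}]$ is an orthogonal matrix ($\mathbf 1_n$ the all-ones vector); $\bar G_{ik}=R_{ik}^TG_{ik}$.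 $\bar G_{-j}$ is the concatenation of $\bar G_{ik}$ over $i\in\{1,\dots,N\}\setminus\{j\}$, $k\in\{1,\dots,m_i\}$ (in lexicographic order), and $\chi_{-j}(t)=(\bar G_{-j}(t)^T,(\mathbf x(t)-\mathbf x^* )^T)^T$. *)

theory Defs
  imports "HOL-Analysis.Analysis"
begin

text \<open>Agents are the elements of a finite type 'a; c a is the coalition (in 0..<N) of agent a.
  The joint action is x :: real^'a, and f a is the local cost of agent a.\<close>

definition C2_fun :: "(real^'a \<Rightarrow> real) \<Rightarrow> bool" where
  "C2_fun g \<longleftrightarrow> (\<exists>Dg D2g.
     (\<forall>x. (g has_derivative blinfun_apply (Dg x)) (at x)) \<and>
     (\<forall>x. (Dg has_derivative blinfun_apply (D2g x)) (at x)) \<and>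
     continuous_on UNIV D2g)"

definition partial_deriv :: "(real^'a \<Rightarrow> real) \<Rightarrow> 'a \<Rightarrow> real^'a \<Rightarrow> real" where
  "partial_deriv g b x = deriv (\<lambda>s. g (x + s *\<^sub>R axis b 1)) 0"

definition coalition_cost :: "('a \<Rightarrow> real^'a \<Rightarrow> real) \<Rightarrow> ('a \<Rightarrow> nat) \<Rightarrow> nat \<Rightarrow> real^'a \<Rightarrow> real" where
  "coalition_cost f c i x = (\<Sum>a\<in>{a. c a = i}. f a x)"

definition pseudo_gradient :: "('a \<Rightarrow> real^'a \<Rightarrow> real) \<Rightarrow> ('a \<Rightarrow> nat) \<Rightarrow> real^'a \<Rightarrow> real^'a" where
  "pseudo_gradient f c x = (\<chi> a. partial_deriv (coalition_cost f c (c a)) a x)"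

definition is_NE :: "nat \<Rightarrow> ('a \<Rightarrow> real^'a \<Rightarrow> real) \<Rightarrow> ('a \<Rightarrow> nat) \<Rightarrow> real^'a \<Rightarrow> bool" where
  "is_NE N f c xs \<longleftrightarrow> (\<forall>i<N. \<forall>y. (\<forall>a. c a \<noteq> i \<longrightarrow> y $ a = xs $ a) \<longrightarrow>
      coalition_cost f c i xs \<le> coalition_cost f c i y)"

definition depends_on :: "(real^'a \<Rightarrow> real) \<Rightarrow> 'a \<Rightarrow> bool" where
  "depends_on g b \<longleftrightarrow> (\<exists>x y. (\<forall>e. e \<noteq> b \<longrightarrow> x $ e = y $ e) \<and> g x \<noteq> g y)"

definition interf :: "('a \<Rightarrow> real^'a \<Rightarrow> real) \<Rightarrow> ('a \<Rightarrow> nat) \<Rightarrow> 'a \<Rightarrow> 'a \<Rightarrow> bool" where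
  "interf f c a b \<longleftrightarrow> a \<noteq> b \<and> c a = c b \<and> (depends_on (f a) b \<or> depends_on (f b) a)"

text \<open>N_Ik \<union> {k}: vertex set of the interference-to-k communication graph\<close>
definition nbhd :: "('a \<Rightarrow> real^'a \<Rightarrow> real) \<Rightarrow> ('a \<Rightarrow> nat) \<Rightarrow> 'a \<Rightarrow> 'a set" where
  "nbhd f c k = {b. interf f c k b} \<union> {k}"

definition graph_connected :: "'v set \<Rightarrow> ('v \<Rightarrow> 'v \<Rightarrow> bool) \<Rightarrow> bool" where
  "graph_connected V E \<longleftrightarrow>
     (\<forall>u\<in>V. \<forall>v\<in>V. (u, v) \<in> {(x, y). x \<in> V \<and> y \<in> V \<and> E x y}\<^sup>*)"

definition class_K :: "(real \<Rightarrow> real) \<Rightarrow> bool" where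
  "class_K \<alpha> \<longleftrightarrow> continuous_on {0..} \<alpha> \<and> \<alpha> 0 = 0 \<and> strict_mono_on {0..} \<alpha>"

definition class_KL :: "(real \<Rightarrow> real \<Rightarrow> real) \<Rightarrow> bool" where
  "class_KL \<phi> \<longleftrightarrow> continuous_on ({0..} \<times> {0..}) (\<lambda>(r, s). \<phi> r s) \<and>
     (\<forall>s\<ge>0. class_K (\<lambda>r. \<phi> r s)) \<and>
     (\<forall>r\<ge>0. antimono_on {0..} (\<phi> r) \<and> (\<phi> r \<longlongrightarrow> 0) at_top)"

definition gterm :: "('a \<Rightarrow> real^'a \<Rightarrow> real) \<Rightarrow> ('a \<Rightarrow> 'a \<Rightarrow> real) \<Rightarrow> real^'a \<Rightarrow> 'a \<Rightarrow> 'a \<Rightarrow> real" where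
  "gterm f w x j k = w j k + partial_deriv (f j) k x"

text \<open>R k j p: entry (row j \<in> nbhd k, column p < n_k - 1) of R_k; [1/sqrt n_k, R_k] orthogonal\<close>
definition valid_R :: "('a \<Rightarrow> real^'a \<Rightarrow> real) \<Rightarrow> ('a \<Rightarrow> nat) \<Rightarrow> ('a \<Rightarrow> 'a \<Rightarrow> nat \<Rightarrow> real) \<Rightarrow> bool" where
  "valid_R f c R \<longleftrightarrow> (\<forall>k. \<forall>p < card (nbhd f c k) - 1.
      (\<Sum>j\<in>nbhd f c k. R k j p) = 0 \<and>
      (\<forall>q < card (nbhd f c k) - 1.
         (\<Sum>j\<in>nbhd f c k. R k j p * R k j q) = (if p = q then 1 else 0)))"

definition Gbar :: "('a \<Rightarrow> real^'a \<Rightarrow> real) \<Rightarrow> ('a \<Rightarrow> nat) \<Rightarrow> ('a \<Rightarrow> 'a \<Rightarrow> nat \<Rightarrow> real)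
    \<Rightarrow> ('a \<Rightarrow> 'a \<Rightarrow> real) \<Rightarrow> real^'a \<Rightarrow> 'a \<Rightarrow> nat \<Rightarrow> real" where
  "Gbar f c R w x k p = (\<Sum>j\<in>nbhd f c k. R k j p * gterm f w x j k)"

text \<open>norm of chi_{-j0} = (Gbar_{-j0}, x - x*)\<close>
definition chi_norm :: "('a \<Rightarrow> real^'a \<Rightarrow> real) \<Rightarrow> ('a \<Rightarrow> nat) \<Rightarrow> ('a \<Rightarrow> 'a \<Rightarrow> nat \<Rightarrow> real)
    \<Rightarrow> nat \<Rightarrow> real^'a \<Rightarrow> ('a \<Rightarrow> 'a \<Rightarrow> real) \<Rightarrow> real^'a \<Rightarrow> real" where
  "chi_norm f c R j0 xs w x = sqrt
     ((\<Sum>k\<in>{k. c k \<noteq> j0}. \<Sum>p<card (nbhd f c k) - 1. (Gbar f c R w x k p)\<^sup>2)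
      + (norm (x - xs))\<^sup>2)"

definition seeking_solution :: "('a \<Rightarrow> real^'a \<Rightarrow> real) \<Rightarrow> ('a \<Rightarrow> nat) \<Rightarrow> ('a \<Rightarrow> 'a \<Rightarrow> real)
    \<Rightarrow> ('a \<Rightarrow> real) \<Rightarrow> real \<Rightarrow> (real \<Rightarrow> real^'a) \<Rightarrow> (real \<Rightarrow> 'a \<Rightarrow> 'a \<Rightarrow> real) \<Rightarrow> bool" where
  "seeking_solution f c A d T x w \<longleftrightarrow>
     (\<forall>a. \<forall>b\<in>nbhd f c a. w 0 a b = 0) \<and>
     (\<forall>t\<in>{0..<T}.
        (x has_vector_derivative (\<chi> a. - d a * gterm f (w t) (x t) a a)) (at t within {0..<T}) \<and>
        (\<forall>j. \<forall>k\<in>nbhd f c j.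
           ((\<lambda>s. w s j k) has_real_derivative
              (- (\<Sum>l\<in>nbhd f c k. A j l * (gterm f (w t) (x t) j k - gterm f (w t) (x t) l k))))
           (at t within {0..<T})))"

end

theory Submission
  imports Defs "HOL-Real_Asymp.Real_Asymp"
begin


lemma decr_within:
  fixes z :: "real \<Rightarrow> real"
  assumes "a \<le> b" "{a..b} \<subseteq> S"
    and "\<And>t. t \<in> {a..b} \<Longrightarrow> (z has_real_derivative z' t) (at t within S)"
    and "\<And>t. t \<in> {a..b} \<Longrightarrow> z' t \<le> 0"
  shows "z b \<le> z a"
proof -
  have "\<exists>x\<in>{a..b}. z b - z a = (\<lambda>h. z' x * h) (b - a)"
    apply (rule mvt_very_simple[OF assms(1)])
    apply (rule has_field_derivative_imp_has_derivative)
    apply (rule DERIV_subset[OF assms(3)])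
    using assms(2) by auto
  then obtain x where x: "x \<in> {a..b}" "z b - z a = (b - a) * z' x" by auto
  have "(b - a) * z' x \<le> 0" using assms(1) assms(4)[OF x(1)] by (simp add: mult_nonneg_nonpos)
  thus ?thesis using x by simp
qed

locale alpha_fun =
  fixes \<alpha> :: "real \<Rightarrow> real"
  assumes cont: "continuous_on {0<..} \<alpha>" and pos: "\<And>y. y > 0 \<Longrightarrow> \<alpha> y > 0"
    and le: "\<And>y. y > 0 \<Longrightarrow> \<alpha> y \<le> y"
begin

definition g :: "real \<Rightarrow> real" where "g y = 1 / \<alpha> y"
definition L :: "real \<Rightarrow> real" where
  "L y = (if 1 \<le> y then integral {1..y} g else - integral {y..1} g)"

lemma g_cont: "0 < a \<Longrightarrow> continuous_on {a..b} g"
  unfolding g_def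
  apply (rule continuous_on_divide)
    apply simp
   apply (rule continuous_on_subset[OF cont]) apply auto[1]
  using pos by (metis atLeastAtMost_iff less_le_trans order_less_irrefl)

lemma L_repr:
  assumes "0 < a" "a \<le> 1" "a \<le> u" "u \<le> b"
  shows "L u = integral {a..u} g - integral {a..1} g"
proof (cases "1 \<le> u")
  case True
  have i: "g integrable_on {a..u}" using g_cont[OF assms(1)] integrable_continuous_real by blast
  have "integral {a..1} g + integral {1..u} g = integral {a..u} g"
    using Henstock_Kurzweil_Integration.integral_combine[OF assms(2) True i] .
  thus ?thesis using True unfolding L_def by simp
next
  case False
  have i: "g integrable_on {a..1}" using g_cont[OF assms(1)] integrable_continuous_real by blast
  have "integral {a..u} g + integral {u..1} g = integral {a..1} g"
    using Henstock_Kurzweil_Integration.integral_combine[OF assms(3) _ i] False by simp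
  thus ?thesis using False unfolding L_def by simp
qed

lemma L_deriv:
  assumes "y > 0" shows "(L has_real_derivative g y) (at y)"
proof -
  define a where "a = min 1 (y/2)"
  define b where "b = max 1 (2*y)"
  have a: "0 < a" "a \<le> 1" "a < y" using assms unfolding a_def by auto
  have b: "y < b" using assms unfolding b_def by auto
  have "((\<lambda>u. integral {a..u} g) has_vector_derivative g y) (at y within {a..b})"
    apply (rule integral_has_vector_derivative[OF g_cont[OF a(1)]]) using a b by auto
  moreover have "interior {a..b} = {a<..<b}" by simp
  hence "at y within {a..b} = at y" using a b by (intro at_within_interior) auto
  ultimately have "((\<lambda>u. integral {a..u} g) has_real_derivative g y) (at y)"
    by (simp add: has_real_derivative_iff_has_vector_derivative)
  hence "((\<lambda>u. integral {a..u} g - integral {a..1} g) has_real_derivative g y) (at y)"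
    by (auto intro!: derivative_eq_intros)
  thus ?thesis
    apply (rule has_field_derivative_transform_within_open[where S="{a<..<b}"])
    using a b by (auto intro!: L_repr[symmetric])
qed

lemma g_pos: "y > 0 \<Longrightarrow> g y > 0" unfolding g_def using pos by simp
lemma g_ge: "y > 0 \<Longrightarrow> g y \<ge> 1 / y" unfolding g_def using pos le
  by (simp add: frac_le)

lemma L_1: "L 1 = 0" unfolding L_def by simp

lemma L_cont: "0 < a \<Longrightarrow> continuous_on {a..b} L"
  by (intro continuous_at_imp_continuous_on ballI DERIV_isCont[OF L_deriv]) auto

lemma L_ln_le: assumes "0 < y" "y \<le> 1" shows "L y \<le> ln y"
proof -
  have "(\<lambda>u. L u - ln u) y \<le> (\<lambda>u. L u - ln u) 1"
    apply (rule DERIV_nonneg_imp_increasing_open[OF assms(2)])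
     apply (rule exI[where x="g _ - 1/_"])
     apply (rule conjI)
      apply (rule derivative_eq_intros L_deriv | use assms in force)+
    using g_ge assms apply force
    apply (intro continuous_on_diff L_cont[OF assms(1)] continuous_on_ln)
    using assms by auto
  thus ?thesis using L_1 by simp
qed

lemma L_ln_ge: assumes "1 \<le> y" shows "ln y \<le> L y"
proof -
  have "(\<lambda>u. L u - ln u) 1 \<le> (\<lambda>u. L u - ln u) y"
    apply (rule DERIV_nonneg_imp_increasing_open[OF assms])
     apply (rule exI[where x="g _ - 1/_"])
     apply (rule conjI)
      apply (rule derivative_eq_intros L_deriv | use assms in force)+
    using g_ge assms apply force
    apply (intro continuous_on_diff L_cont continuous_on_ln)
    using assms by auto
  thus ?thesis using L_1 by simp
qed

lemma L_less: assumes "0 < u" "u < v" shows "L u < L v"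
  apply (rule DERIV_pos_imp_increasing[OF assms(2)])
  using assms L_deriv g_pos by (meson less_le_trans)

definition H :: "real \<Rightarrow> real" where "H y = (if y \<le> 0 then 0 else exp (L y))"

lemma H_0: "H 0 = 0" unfolding H_def by simp

lemma H_pos: "y > 0 \<Longrightarrow> H y > 0" unfolding H_def by simp

lemma H_nonneg: "H y \<ge> 0" unfolding H_def by simp

lemma H_deriv: assumes "y > 0" shows "(H has_real_derivative H y * g y) (at y)"
proof -
  have "((\<lambda>u. exp (L u)) has_real_derivative exp (L y) * g y) (at y)"
    by (rule derivative_eq_intros L_deriv[OF assms] | simp)+
  hence "((\<lambda>u. exp (L u)) has_real_derivative H y * g y) (at y)"
    using assms unfolding H_def by simp
  thus ?thesis
    apply (rule has_field_derivative_transform_within_open[where S="{0<..}"])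
    using assms unfolding H_def by auto
qed

lemma H_le: assumes "0 \<le> y" "y \<le> 1" shows "H y \<le> y"
proof (cases "y = 0")
  case True then show ?thesis by (simp add: H_0)
next
  case False
  hence "0 < y" using assms by simp
  hence "exp (L y) \<le> exp (ln y)" using L_ln_le assms by (simp del: exp_ln)
  thus ?thesis using \<open>0 < y\<close> unfolding H_def by simp
qed

lemma H_ge: assumes "1 \<le> y" shows "y \<le> H y"
proof -
  have "exp (ln y) \<le> exp (L y)" using L_ln_ge assms by (simp del: exp_ln)
  thus ?thesis using assms unfolding H_def by simp
qed

lemma H_strict: "strict_mono_on {0..} H"
proof (rule strict_mono_onI)
  fix r s :: real assume rs: "r \<in> {0..}" "s \<in> {0..}" "r < s"
  show "H r < H s"
  proof (cases "r = 0")
    case True then show ?thesis using rs H_pos by (simp add: H_0)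
  next
    case False
    hence "0 < r" using rs by simp
    thus ?thesis using L_less[OF _ rs(3)] rs unfolding H_def by simp
  qed
qed

lemma H_mono: "0 \<le> r \<Longrightarrow> r \<le> s \<Longrightarrow> H r \<le> H s"
  using strict_mono_on_leD[OF H_strict] by simp

lemma H_cont: "continuous_on {0..} H"
proof -
  have "continuous (at y within {0..}) H" if y: "y \<in> {0..}" for y
  proof (cases "y = 0")
    case False
    hence "y > 0" using y by simp
    thus ?thesis using DERIV_isCont[OF H_deriv] continuous_at_imp_continuous_within by blast
  next
    case True
    have "(H \<longlongrightarrow> 0) (at 0 within {0..})"
    proof (rule tendsto_sandwich[where f="\<lambda>_. 0" and h="\<lambda>u. u"])
      show "\<forall>\<^sub>F n in at 0 within {0..}. 0 \<le> H n" by (simp add: H_nonneg)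
      show "\<forall>\<^sub>F n in at 0 within {0..}. H n \<le> n"
        unfolding eventually_at
        by (rule exI[where x=1]) (auto intro!: H_le simp: dist_real_def)
      show "((\<lambda>_. 0) \<longlongrightarrow> (0::real)) (at 0 within {0..})" by simp
      show "((\<lambda>u. u) \<longlongrightarrow> (0::real)) (at 0 within {0..})"
        by (metis tendsto_ident_at)
    qed
    thus ?thesis using True by (simp add: continuous_within H_0)
  qed
  thus ?thesis using continuous_on_eq_continuous_within by blast
qed

definition Hinv :: "real \<Rightarrow> real" where "Hinv y = (THE r. 0 \<le> r \<and> H r = y)"

lemma H_inj: "0 \<le> r \<Longrightarrow> 0 \<le> r' \<Longrightarrow> H r = H r' \<Longrightarrow> r = r'"
  using strict_mono_on_eqD[OF H_strict] by simp

lemma H_surj: assumes "0 \<le> y" shows "\<exists>r. 0 \<le> r \<and> r \<le> max 1 y \<and> H r = y"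
proof -
  have "H 0 \<le> y" using assms H_0 by simp
  moreover have "y \<le> H (max 1 y)" using H_ge[of "max 1 y"] by simp
  ultimately show ?thesis using IVT'[of H 0 y "max 1 y"] continuous_on_subset[OF H_cont]
    by force
qed

lemma Hinv: assumes "0 \<le> y" shows "0 \<le> Hinv y \<and> H (Hinv y) = y"
proof -
  obtain r where r: "0 \<le> r" "H r = y" using H_surj[OF assms] by auto
  have "Hinv y = r" unfolding Hinv_def
    apply (rule the_equality) using r H_inj by auto
  thus ?thesis using r by simp
qed

lemma Hinv_H: "0 \<le> r \<Longrightarrow> Hinv (H r) = r"
  using Hinv[OF H_nonneg[of r]] H_inj by auto

lemma Hinv_0: "Hinv 0 = 0" using Hinv_H[of 0] H_0 by simp

lemma Hinv_nonneg: "0 \<le> y \<Longrightarrow> 0 \<le> Hinv y" using Hinv by blast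

lemma Hinv_less_iff: "0 \<le> y \<Longrightarrow> 0 \<le> r \<Longrightarrow> Hinv y < r \<longleftrightarrow> y < H r"
  using Hinv[of y] strict_mono_on_less[OF H_strict, of "Hinv y" r] by auto

lemma Hinv_le_iff: "0 \<le> y \<Longrightarrow> 0 \<le> r \<Longrightarrow> Hinv y \<le> r \<longleftrightarrow> y \<le> H r"
  using Hinv[of y] strict_mono_on_less_eq[OF H_strict, of "Hinv y" r] by auto

lemma Hinv_strict: "strict_mono_on {0..} Hinv"
proof (rule strict_mono_onI)
  fix r s :: real assume rs: "r \<in> {0..}" "s \<in> {0..}" "r < s"
  show "Hinv r < Hinv s" using Hinv_less_iff[of r "Hinv s"] Hinv[of s] rs by auto
qed

lemma Hinv_mono: "0 \<le> r \<Longrightarrow> r \<le> s \<Longrightarrow> Hinv r \<le> Hinv s"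
  using strict_mono_on_leD[OF Hinv_strict] by simp

lemma Hinv_cont: "continuous_on {0..} Hinv"
proof -
  have "continuous (at y within {0..}) Hinv" if y: "y \<in> {0..}" for y
  proof -
    define M where "M = max 1 (y + 1)"
    have M: "0 \<le> M" "y + 1 \<le> H M" using H_ge[of M] unfolding M_def by auto
    have img: "H ` {0..M} = {0..H M}"
    proof
      show "H ` {0..M} \<subseteq> {0..H M}" using H_nonneg H_mono by auto
      show "{0..H M} \<subseteq> H ` {0..M}"
      proof
        fix z assume z: "z \<in> {0..H M}"
        then obtain r where r: "0 \<le> r" "H r = z" using Hinv[of z] by auto
        have "r \<le> M" using r z strict_mono_on_less_eq[OF H_strict, of r M] M by auto
        thus "z \<in> H ` {0..M}" using r by auto
      qed
    qed
    have "continuous_on (H ` {0..M}) Hinv"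
      apply (rule continuous_on_inv)
      using continuous_on_subset[OF H_cont] Hinv_H by auto
    hence c: "continuous_on {0..H M} Hinv" using img by simp
    have "y \<in> {0..H M}" using y M by auto
    hence "continuous (at y within {0..H M}) Hinv"
      using c continuous_on_eq_continuous_within by blast
    moreover have "at y within {0..} = at y within {0..H M}"
      apply (rule at_within_nhd[where S="{..<H M}"]) using y M by auto
    ultimately show ?thesis by simp
  qed
  thus ?thesis using continuous_on_eq_continuous_within by blast
qed

lemma Hinv_tendsto0:
  assumes "(u \<longlongrightarrow> 0) F" "\<forall>\<^sub>F x in F. 0 \<le> u x"
  shows "((\<lambda>x. Hinv (u x)) \<longlongrightarrow> 0) F"
proof (rule order_tendstoI)
  fix a :: real assume a: "a < 0"
  show "\<forall>\<^sub>F x in F. a < Hinv (u x)"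
    using assms(2) by (rule eventually_mono) (use Hinv_nonneg a in force)
next
  fix a :: real assume a: "0 < a"
  hence "0 < H a" using H_pos by simp
  hence ev: "\<forall>\<^sub>F x in F. u x < H a" using assms(1) order_tendstoD(2) by blast
  show "\<forall>\<^sub>F x in F. Hinv (u x) < a"
    using eventually_conj[OF ev assms(2)] by (rule eventually_mono) (use Hinv_less_iff a in force)
qed

definition KLfun :: "real \<Rightarrow> real \<Rightarrow> real \<Rightarrow> real \<Rightarrow> real" where
  "KLfun c0 c1 r s = sqrt (Hinv (H (c1 * r\<^sup>2) * exp (- s / 2)) / c0)"

lemma KLfun: assumes "0 < c0" "0 < c1" shows "class_KL (KLfun c0 c1)"
proof -
  have inner_nonneg: "0 \<le> H (c1 * r\<^sup>2) * exp (- s / 2)" for r s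
    using H_nonneg by simp
  have ci: "continuous_on A (\<lambda>p. H (c1 * (fst p)\<^sup>2) * exp (- snd p / 2))" for A :: "(real \<times> real) set"
    apply (intro continuous_intros)
    apply (rule continuous_on_compose2[OF H_cont])
    using assms by (auto intro!: continuous_intros)
  have cont: "continuous_on A (\<lambda>p. KLfun c0 c1 (fst p) (snd p))" for A
    unfolding KLfun_def
    apply (intro continuous_intros)
    apply (rule continuous_on_compose2[OF Hinv_cont ci])
    using inner_nonneg assms by auto
  have c1: "continuous_on ({0..} \<times> {0..}) (\<lambda>(r, s). KLfun c0 c1 r s)"
    using cont[of "{0..} \<times> {0..}"] by (simp add: case_prod_beta)
  have cK: "class_K (\<lambda>r. KLfun c0 c1 r s)" if "s \<ge> 0" for s
    unfolding class_K_def
  proof (intro conjI)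
    show "continuous_on {0..} (\<lambda>r. KLfun c0 c1 r s)"
      using continuous_on_compose2[OF cont[of UNIV], of "{0..}" "\<lambda>r. (r, s)"]
      by (simp add: continuous_on_Pair continuous_on_id continuous_on_const)
    show "KLfun c0 c1 0 s = 0" unfolding KLfun_def by (simp add: H_0 Hinv_0)
    show "strict_mono_on {0..} (\<lambda>r. KLfun c0 c1 r s)"
    proof (rule strict_mono_onI)
      fix r r' :: real assume rr: "r \<in> {0..}" "r' \<in> {0..}" "r < r'"
      have "c1 * r\<^sup>2 < c1 * r'\<^sup>2" using rr assms by (simp add: power_strict_mono)
      hence "H (c1 * r\<^sup>2) < H (c1 * r'\<^sup>2)" using strict_mono_on_less[OF H_strict] assms by simp
      hence "H (c1 * r\<^sup>2) * exp (- s / 2) < H (c1 * r'\<^sup>2) * exp (- s / 2)" by simp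
      hence "Hinv (H (c1 * r\<^sup>2) * exp (- s / 2)) < Hinv (H (c1 * r'\<^sup>2) * exp (- s / 2))"
        using strict_mono_on_less[OF Hinv_strict] inner_nonneg by simp
      thus "KLfun c0 c1 r s < KLfun c0 c1 r' s" unfolding KLfun_def using assms
        by (simp add: divide_strict_right_mono)
    qed
  qed
  have anti: "antimono_on {0..} (KLfun c0 c1 r)" for r
  proof (rule monotone_onI)
    fix s s' :: real assume ss: "s \<in> {0..}" "s' \<in> {0..}" "s \<le> s'"
    have "H (c1 * r\<^sup>2) * exp (- s' / 2) \<le> H (c1 * r\<^sup>2) * exp (- s / 2)"
      using ss H_nonneg by (intro mult_left_mono) auto
    hence "Hinv (H (c1 * r\<^sup>2) * exp (- s' / 2)) \<le> Hinv (H (c1 * r\<^sup>2) * exp (- s / 2))"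
      using Hinv_mono inner_nonneg by blast
    thus "KLfun c0 c1 r s' \<le> KLfun c0 c1 r s" unfolding KLfun_def using assms
      by (simp add: divide_right_mono)
  qed
  have lim: "(KLfun c0 c1 r \<longlongrightarrow> 0) at_top" for r
  proof -
    have e: "((\<lambda>s::real. exp (- s / 2)) \<longlongrightarrow> 0) at_top" by real_asymp
    have "((\<lambda>s. H (c1 * r\<^sup>2) * exp (- s / 2)) \<longlongrightarrow> H (c1 * r\<^sup>2) * 0) at_top"
      by (intro tendsto_intros e)
    hence "((\<lambda>s. Hinv (H (c1 * r\<^sup>2) * exp (- s / 2))) \<longlongrightarrow> 0) at_top"
      by (intro Hinv_tendsto0 always_eventually allI mult_nonneg_nonneg H_nonneg) auto
    hence "((\<lambda>s. sqrt (Hinv (H (c1 * r\<^sup>2) * exp (- s / 2)) / c0)) \<longlongrightarrow> sqrt (0 / c0)) at_top"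
      using assms by (intro tendsto_intros) auto
    thus ?thesis unfolding KLfun_def by simp
  qed
  show ?thesis unfolding class_KL_def using c1 cK anti lim by blast
qed

lemma comparison:
  fixes y y' :: "real \<Rightarrow> real"
  assumes der: "\<And>t. t \<in> {0..<T} \<Longrightarrow> (y has_real_derivative y' t) (at t within {0..<T})"
    and dec: "\<And>t. t \<in> {0..<T} \<Longrightarrow> \<eta> \<le> y t \<Longrightarrow> y t \<le> Rb \<Longrightarrow> y' t \<le> - \<kappa> * \<alpha> (y t)"
    and eta: "0 < \<eta>" "\<eta> < Rb" and y0: "0 \<le> y 0" "y 0 < Rb" and kap: "0 < \<kappa>"
    and ynn: "\<And>t. t \<in> {0..<T} \<Longrightarrow> 0 \<le> y t"
  shows "\<And>t. t \<in> {0..<T} \<Longrightarrow> y t \<le> max \<eta> (Hinv (H (y 0) * exp (- \<kappa> * t)))"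
proof -
  define z where "z t = H (y t) * exp (\<kappa> * t)" for t
  have ycont: "continuous_on {a..b} y" if "0 \<le> a" "b < T" for a b
    apply (rule continuous_on_subset[where s="{0..<T}"])
     apply (rule DERIV_continuous_on[OF der]) apply assumption
    using that by auto
  have zder: "(z has_real_derivative (H (y t) * g (y t) * y' t) * exp (\<kappa> * t) + H (y t) * (exp (\<kappa> * t) * \<kappa>))
      (at t within {0..<T})" if "t \<in> {0..<T}" "0 < y t" for t
  proof -
    have e: "((\<lambda>t. exp (\<kappa>*t)) has_real_derivative exp (\<kappa>*t) * \<kappa>) (at t within {0..<T})"
      by (auto intro!: derivative_eq_intros)
    show ?thesis
      using DERIV_mult[OF DERIV_chain2[OF H_deriv[OF that(2)] der[OF that(1)]] e]
      unfolding z_def by (simp add: algebra_simps)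
  qed
  have zdec: "(H (y t) * g (y t) * y' t) * exp (\<kappa> * t) + H (y t) * (exp (\<kappa> * t) * \<kappa>) \<le> 0"
    if "t \<in> {0..<T}" "\<eta> \<le> y t" "y t \<le> Rb" for t
  proof -
    have yp: "0 < y t" using that eta by simp
    have "H (y t) * g (y t) * y' t \<le> H (y t) * g (y t) * (- \<kappa> * \<alpha> (y t))"
      using dec[OF that] H_pos[OF yp] g_pos[OF yp] by (intro mult_left_mono) auto
    also have "\<dots> = - \<kappa> * H (y t)" unfolding g_def using pos[OF yp] by simp
    finally have "H (y t) * g (y t) * y' t \<le> - \<kappa> * H (y t)" .
    hence "(H (y t) * g (y t) * y' t) * exp (\<kappa> * t) \<le> (- \<kappa> * H (y t)) * exp (\<kappa> * t)"
      by (intro mult_right_mono) auto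
    thus ?thesis by (simp add: algebra_simps)
  qed
  have zmono: "z b \<le> z a" if "0 \<le> a" "a \<le> b" "b < T" "\<And>t. t \<in> {a..b} \<Longrightarrow> \<eta> \<le> y t \<and> y t \<le> Rb" for a b
    apply (rule decr_within[OF that(2), where S="{0..<T}"])
    using that apply force
     apply (rule zder) using that eta apply force using that eta apply force
    apply (rule zdec) using that by auto
  have step1: "y t1 \<le> max \<eta> (Hinv (H (y 0) * exp (- \<kappa> * t1)))"
    if t1: "t1 \<in> {0..<T}" "\<And>\<tau>. \<tau> \<in> {0..t1} \<Longrightarrow> y \<tau> \<le> Rb" for t1
  proof (rule ccontr)
    assume "\<not> ?thesis"
    hence gt: "\<eta> < y t1" "Hinv (H (y 0) * exp (- \<kappa> * t1)) < y t1" by auto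
    define Z where "Z = {\<tau> \<in> {0..t1}. y \<tau> \<le> \<eta>}"
    show False
    proof (cases "Z = {}")
      case True
      hence "\<And>\<tau>. \<tau> \<in> {0..t1} \<Longrightarrow> \<eta> \<le> y \<tau> \<and> y \<tau> \<le> Rb" using t1 unfolding Z_def by force
      hence "z t1 \<le> z 0" using zmono[of 0 t1] t1 by auto
      hence "H (y t1) * exp (\<kappa> * t1) \<le> H (y 0)" unfolding z_def by simp
      hence "H (y t1) \<le> H (y 0) * exp (- \<kappa> * t1)"
        by (simp add: exp_minus field_simps)
      hence "Hinv (H (y t1)) \<le> Hinv (H (y 0) * exp (- \<kappa> * t1))"
        using Hinv_mono H_nonneg by blast
      thus False using Hinv_H ynn t1 gt by force
    next
      case False
      have clZ: "closed Z" unfolding Z_def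
        by (rule continuous_on_closed_Collect_le[OF ycont]) (use t1 in \<open>auto intro: continuous_intros\<close>)
      define t0 where "t0 = Sup Z"
      have t0Z: "t0 \<in> Z" unfolding t0_def
        by (rule closed_contains_Sup[OF False _ clZ]) (auto simp: Z_def bdd_above_def)
      have t0le: "0 \<le> t0" "t0 \<le> t1" "y t0 \<le> \<eta>" using t0Z unfolding Z_def by auto
      have t0lt: "t0 < t1" using t0le gt by (metis order_le_less not_le)
      have above: "\<eta> < y \<tau>" if "\<tau> \<in> {t0<..t1}" for \<tau>
      proof (rule ccontr)
        assume "\<not> \<eta> < y \<tau>"
        hence "\<tau> \<in> Z" using that t0le unfolding Z_def by auto
        hence "\<tau> \<le> t0" unfolding t0_def
          by (intro cSup_upper) (auto simp: Z_def bdd_above_def)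
        thus False using that by auto
      qed
      define Y where "Y = {\<tau> \<in> {t0..t1}. \<eta> \<le> y \<tau>}"
      have clY: "closed Y" unfolding Y_def
        by (rule continuous_on_closed_Collect_le) (use t0le t1 in \<open>auto intro: continuous_intros ycont\<close>)
      have "Inf {t0<..t1} \<in> Y"
        by (rule closed_subset_contains_Inf[OF clY]) (use above t0lt in \<open>auto simp: Y_def less_imp_le\<close>)
      hence "\<eta> \<le> y t0" using t0lt unfolding Y_def by simp
      hence yt0: "y t0 = \<eta>" using t0le by simp
      have "\<And>t. t \<in> {t0..t1} \<Longrightarrow> \<eta> \<le> y t \<and> y t \<le> Rb"
        using above yt0 t1 t0le by (metis atLeastAtMost_iff greaterThanAtMost_iff order_le_less order_trans less_imp_le)
      hence "z t1 \<le> z t0" using zmono[of t0 t1] t0le t1 by auto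
      hence "H (y t1) * exp (\<kappa> * t1) \<le> H \<eta> * exp (\<kappa> * t0)" unfolding z_def yt0 .
      also have "\<dots> \<le> H \<eta> * exp (\<kappa> * t1)"
        using t0le kap H_nonneg by (intro mult_left_mono) auto
      finally have "H (y t1) \<le> H \<eta>" by simp
      moreover have "H \<eta> < H (y t1)" using strict_mono_on_less[OF H_strict] gt eta by simp
      ultimately show False by simp
    qed
  qed
  have step2: "y t < Rb" if t: "t \<in> {0..<T}" for t
  proof (rule ccontr)
    assume "\<not> y t < Rb"
    define Z where "Z = {\<tau> \<in> {0..t}. Rb \<le> y \<tau>}"
    have ne: "Z \<noteq> {}" using \<open>\<not> y t < Rb\<close> t unfolding Z_def by auto
    have clZ: "closed Z" unfolding Z_def
      by (rule continuous_on_closed_Collect_le) (use t in \<open>auto intro: continuous_intros ycont\<close>)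
    define t0 where "t0 = Inf Z"
    have t0Z: "t0 \<in> Z" unfolding t0_def
      by (rule closed_contains_Inf[OF ne _ clZ]) (auto simp: Z_def bdd_below_def)
    have t0p: "0 \<le> t0" "t0 \<le> t" "Rb \<le> y t0" using t0Z unfolding Z_def by auto
    have below0: "y \<tau> < Rb" if "\<tau> \<in> {0..<t0}" for \<tau>
    proof -
      have bb: "bdd_below Z" unfolding bdd_below_def Z_def by auto
      have "\<tau> \<notin> Z" using cInf_lower[of \<tau> Z, OF _ bb] that unfolding t0_def[symmetric] by auto
      thus ?thesis using that t0p unfolding Z_def by auto
    qed
    have t0pos: "0 < t0" using t0p y0 by (metis order_le_less not_le)
    define Y where "Y = {\<tau> \<in> {0..t0}. y \<tau> \<le> Rb}"
    have clY: "closed Y" unfolding Y_def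
      by (rule continuous_on_closed_Collect_le) (use t0p t in \<open>auto intro: continuous_intros ycont\<close>)
    have "Sup {0..<t0} \<in> Y"
      by (rule closed_subset_contains_Sup[OF clY]) (use below0 t0pos in \<open>auto simp: Y_def less_imp_le\<close>)
    hence "y t0 \<le> Rb" using t0pos unfolding Y_def by simp
    have below: "y \<tau> \<le> Rb" if "\<tau> \<in> {0..t0}" for \<tau>
      using below0[of \<tau>] \<open>y t0 \<le> Rb\<close> that by (cases "\<tau> = t0") auto
    have "y t0 \<le> max \<eta> (Hinv (H (y 0) * exp (- \<kappa> * t0)))"
      by (rule step1) (use t t0p below in auto)
    also have "Hinv (H (y 0) * exp (- \<kappa> * t0)) \<le> Hinv (H (y 0))"
      using t0p kap H_nonneg by (intro Hinv_mono) (auto intro!: mult_left_le)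
    hence "max \<eta> (Hinv (H (y 0) * exp (- \<kappa> * t0))) < Rb"
      using Hinv_H[OF y0(1)] y0 eta by auto
    finally show False using t0p by simp
  qed
  fix t assume "t \<in> {0..<T}"
  thus "y t \<le> max \<eta> (Hinv (H (y 0) * exp (- \<kappa> * t)))"
    using step1 step2 by (meson atLeastAtMost_iff atLeastLessThan_iff less_imp_le order_le_less_trans)
qed

end


locale omega_setup =
  fixes Q :: "real^'a::finite \<Rightarrow> real^'a" and wt :: "'a \<Rightarrow> real" and lam :: real
  assumes Qcont: "continuous_on UNIV Q" and Qpos: "\<And>e. e \<noteq> 0 \<Longrightarrow> e \<bullet> Q e > 0"
    and wt_pos: "\<And>a. wt a > 0" and lam: "lam > 0"
begin

definition Vw :: "real^'a \<Rightarrow> real" where "Vw e = (\<Sum>a\<in>UNIV. wt a * (e$a)\<^sup>2)"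
definition om :: "real^'a \<Rightarrow> real \<Rightarrow> real" where "om e u = 2 * (e \<bullet> Q e) + lam * u"
definition val :: "real \<Rightarrow> (real^'a) \<times> real \<Rightarrow> real" where
  "val \<rho> p = om (fst p) (snd p) + \<bar>Vw (fst p) + snd p - \<rho>\<bar>"
definition alph :: "real \<Rightarrow> real" where
  "alph \<rho> = Inf (val \<rho> ` {p. snd p \<ge> 0})"

lemma eQe_nonneg: "0 \<le> e \<bullet> Q e"
  using Qpos[of e] by (cases "e = 0") auto

lemma Vw_nonneg: "0 \<le> Vw e" unfolding Vw_def using wt_pos
  by (intro sum_nonneg) (simp add: less_imp_le)

lemma om_nonneg: "u \<ge> 0 \<Longrightarrow> 0 \<le> om e u" unfolding om_def using eQe_nonneg lam by simp

lemma val_nonneg: "snd p \<ge> 0 \<Longrightarrow> 0 \<le> val \<rho> p" unfolding val_def using om_nonneg by simp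

lemma bdd: "bdd_below (val \<rho> ` {p. snd p \<ge> 0})"
  by (rule bdd_belowI[of _ 0]) (auto intro: val_nonneg)

lemma ne: "val \<rho> ` {p. snd p \<ge> 0} \<noteq> {}" by auto

lemma alph_le_val: "snd p \<ge> 0 \<Longrightarrow> alph \<rho> \<le> val \<rho> p"
  unfolding alph_def by (rule cInf_lower[OF _ bdd]) auto

lemma alph_le: "u \<ge> 0 \<Longrightarrow> alph (Vw e + u) \<le> om e u"
  using alph_le_val[of "(e,u)" "Vw e + u"] unfolding val_def by simp

lemma alph_nonneg: "0 \<le> alph \<rho>"
  unfolding alph_def by (rule cInf_greatest[OF ne]) (auto intro: val_nonneg)

lemma Vw_0: "Vw 0 = 0" unfolding Vw_def by simp

lemma alph_le_self: "\<rho> \<ge> 0 \<Longrightarrow> alph \<rho> \<le> \<rho>"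
  using alph_le_val[of "(0,0)" \<rho>] unfolding val_def om_def by (simp add: Vw_0)

lemma alph_lip1: "alph \<rho> - \<bar>\<rho> - \<rho>'\<bar> \<le> alph \<rho>'"
proof -
  have "alph \<rho> - \<bar>\<rho> - \<rho>'\<bar> \<le> val \<rho>' p" if "snd p \<ge> 0" for p
  proof -
    have "alph \<rho> \<le> val \<rho> p" by (rule alph_le_val[OF that])
    also have "\<dots> \<le> val \<rho>' p + \<bar>\<rho> - \<rho>'\<bar>" unfolding val_def by linarith
    finally show ?thesis by simp
  qed
  thus ?thesis unfolding alph_def[of \<rho>'] by (intro cInf_greatest[OF ne]) auto
qed

lemma alph_lip: "1-lipschitz_on UNIV alph"
  apply (rule lipschitz_onI)
  using alph_lip1 by (auto simp: dist_real_def abs_le_iff abs_minus_commute) (smt (verit) alph_lip1)+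

lemma alph_cont: "continuous_on UNIV alph"
  by (rule lipschitz_on_continuous_on[OF alph_lip])

definition wmin :: real where "wmin = Min (range wt)"
lemma wmin_pos: "0 < wmin" unfolding wmin_def using wt_pos by auto
lemma wmin_le: "wmin \<le> wt a" unfolding wmin_def by auto

lemma norm_sq: "(norm e)\<^sup>2 = (\<Sum>a\<in>UNIV. (e$a)\<^sup>2)"
proof -
  have "(norm e)\<^sup>2 = e \<bullet> e" by (rule power2_norm_eq_inner)
  also have "\<dots> = (\<Sum>a\<in>UNIV. e$a * e$a)" by (simp add: inner_vec_def)
  finally show ?thesis by (simp add: power2_eq_square)
qed

lemma Vw_ge: "wmin * (norm e)\<^sup>2 \<le> Vw e"
  unfolding norm_sq Vw_def sum_distrib_left
  by (intro sum_mono mult_right_mono wmin_le) auto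

lemma Vw_cont: "continuous_on S Vw"
  unfolding Vw_def by (intro continuous_intros)

lemma eQe_cont: "continuous_on S (\<lambda>e. e \<bullet> Q e)"
  by (intro continuous_intros continuous_on_subset[OF Qcont]) auto

lemma alph_pos: assumes "\<rho> > 0" shows "alph \<rho> > 0"
proof -
  define K where "K = {e. \<rho>/4 \<le> Vw e \<and> Vw e \<le> 3*\<rho>/2}"
  obtain m where m: "m > 0" "\<And>e. e \<in> K \<Longrightarrow> m \<le> e \<bullet> Q e"
  proof (cases "K = {}")
    case True thus ?thesis using that[of 1] by auto
  next
    case False
    have cl: "closed K" unfolding K_def
      using continuous_closed_preimage_constant Vw_cont
      by (intro closed_Collect_conj closed_Collect_le) (auto intro: continuous_intros Vw_cont[unfolded continuous_on_eq_continuous_within])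
    have bd: "bounded K" unfolding bounded_iff
    proof (intro exI ballI)
      fix e assume "e \<in> K"
      hence "wmin * (norm e)\<^sup>2 \<le> 3*\<rho>/2" using Vw_ge[of e] unfolding K_def by auto
      hence "(norm e)\<^sup>2 \<le> (3*\<rho>/2) / wmin" using wmin_pos by (simp add: field_simps)
      thus "norm e \<le> sqrt ((3*\<rho>/2) / wmin)" by (simp add: real_le_rsqrt)
    qed
    obtain e0 where e0: "e0 \<in> K" "\<And>e. e \<in> K \<Longrightarrow> e0 \<bullet> Q e0 \<le> e \<bullet> Q e"
      using continuous_attains_inf[OF compact_eq_bounded_closed[THEN iffD2, OF conjI[OF bd cl]] False eQe_cont] by auto
    have "e0 \<noteq> 0" using e0(1) assms Vw_0 unfolding K_def by auto
    thus ?thesis using that[of "e0 \<bullet> Q e0"] Qpos e0 by auto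
  qed
  define b where "b = min (\<rho>/2) (min (lam * \<rho> / 4) (2 * m))"
  have bpos: "b > 0" unfolding b_def using assms lam m by auto
  have "b \<le> val \<rho> p" if p: "snd p \<ge> 0" for p
  proof -
    obtain e u where eu: "p = (e, u)" by (cases p)
    have u: "u \<ge> 0" using p eu by simp
    show ?thesis
    proof (cases "\<bar>Vw e + u - \<rho>\<bar> \<ge> \<rho>/2")
      case True
      have "min (\<rho>/2) (min (lam * \<rho> / 4) (2 * m)) \<le> \<rho>/2" by simp
      thus ?thesis unfolding val_def eu b_def using om_nonneg[OF u, of e] True by simp
    next
      case False
      show ?thesis
      proof (cases "u \<ge> \<rho>/4")
        case True
        have "lam * \<rho> / 4 \<le> lam * u" using True lam by simp
        hence "lam * \<rho> / 4 \<le> om e u" unfolding om_def using eQe_nonneg[of e] by simp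
        thus ?thesis unfolding val_def eu b_def by simp
      next
        case F2: False
        have "e \<in> K" unfolding K_def using False F2 u by (auto simp: abs_if split: if_splits)
        hence "m \<le> e \<bullet> Q e" using m by blast
        hence "2 * m \<le> om e u" unfolding om_def using u lam by (simp add: add_increasing2)
        thus ?thesis unfolding val_def eu b_def by simp
      qed
    qed
  qed
  hence "b \<le> alph \<rho>" unfolding alph_def by (intro cInf_greatest[OF ne]) auto
  thus ?thesis using bpos by simp
qed

lemma alpha_fun: "alpha_fun alph"
  by unfold_locales (auto intro: continuous_on_subset[OF alph_cont] alph_pos alph_le_self)

end


lemma line_deriv:
  fixes g :: "real^'a::finite \<Rightarrow> real"
  assumes "(g has_derivative G) (at x)"
  shows "((\<lambda>s. g (x + s *\<^sub>R v)) has_real_derivative G v) (at 0)"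
proof -
  have lin: "linear G" using has_derivative_bounded_linear[OF assms] bounded_linear.linear by blast
  have i: "((\<lambda>s. x + s *\<^sub>R v) has_derivative (\<lambda>s. s *\<^sub>R v)) (at 0)"
    by (auto intro!: derivative_eq_intros)
  have "((\<lambda>s. g (x + s *\<^sub>R v)) has_derivative (\<lambda>s. G (s *\<^sub>R v))) (at 0)"
    by (rule has_derivative_compose[OF i]) (simp add: assms)
  hence "((\<lambda>s. g (x + s *\<^sub>R v)) has_derivative (\<lambda>s. G v * s)) (at 0)"
    using linear_scale[OF lin] by (simp add: mult.commute)
  thus ?thesis by (simp add: has_field_derivative_def)
qed

lemma pd_eq:
  assumes "(g has_derivative G) (at x)"
  shows "partial_deriv g b x = G (axis b 1)"
  unfolding partial_deriv_def using line_deriv[OF assms] by (rule DERIV_imp_deriv)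

lemma pd_zero:
  assumes "\<not> depends_on g b"
  shows "partial_deriv g b x = 0"
proof -
  have "g (x + s *\<^sub>R axis b 1) = g x" for s
  proof -
    have "\<forall>e. e \<noteq> b \<longrightarrow> (x + s *\<^sub>R axis b 1)$e = x$e" by (simp add: axis_def)
    thus ?thesis using assms unfolding depends_on_def by blast
  qed
  hence "(\<lambda>s. g (x + s *\<^sub>R axis b 1)) = (\<lambda>s. g x)" by auto
  thus ?thesis unfolding partial_deriv_def by simp
qed

lemma coal_deriv:
  assumes "\<And>a. (f a has_derivative G a) (at x)"
  shows "(coalition_cost f c i has_derivative (\<lambda>h. \<Sum>a\<in>{a. c a = i}. G a h)) (at x)"
  unfolding coalition_cost_def[abs_def]
  by (rule has_derivative_sum) (use assms in auto)

lemma curve_deriv: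
  fixes Df :: "real^'a::finite \<Rightarrow> ((real^'a) \<Rightarrow>\<^sub>L real)"
  assumes D2: "(Df has_derivative blinfun_apply (D2 (x t))) (at (x t))"
    and xd: "(x has_vector_derivative x') (at t within S)"
  shows "((\<lambda>t. blinfun_apply (Df (x t)) v) has_real_derivative blinfun_apply (blinfun_apply (D2 (x t)) x') v) (at t within S)"
proof -
  have "((\<lambda>t. Df (x t)) has_derivative (\<lambda>h. blinfun_apply (D2 (x t)) (h *\<^sub>R x'))) (at t within S)"
    using has_derivative_compose[OF xd[unfolded has_vector_derivative_def] D2] .
  hence "((\<lambda>t. blinfun_apply (Df (x t)) v) has_derivative (\<lambda>h. blinfun_apply (blinfun_apply (D2 (x t)) (h *\<^sub>R x')) v)) (at t within S)"
    using bounded_linear.has_derivative[OF blinfun.bounded_linear_left] by blast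
  hence "((\<lambda>t. blinfun_apply (Df (x t)) v) has_derivative (\<lambda>h. blinfun_apply (blinfun_apply (D2 (x t)) x') v * h)) (at t within S)"
    by (simp add: blinfun.scaleR_right blinfun.scaleR_left mult.commute)
  thus ?thesis by (simp add: has_field_derivative_def)
qed

lemma Df_cont:
  fixes Df :: "real^'a::finite \<Rightarrow> ((real^'a) \<Rightarrow>\<^sub>L real)"
  assumes "\<And>x. (Df has_derivative blinfun_apply (D2 x)) (at x)"
  shows "continuous_on S (\<lambda>x. blinfun_apply (Df x) v)"
proof -
  have "isCont Df x" for x using has_derivative_continuous[OF assms] .
  hence "continuous_on UNIV Df" by (simp add: continuous_at_imp_continuous_on)
  hence "continuous_on UNIV (\<lambda>x. blinfun_apply (Df x) v)"
    by (auto intro!: continuous_intros)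
  thus ?thesis by (rule continuous_on_subset) auto
qed


definition vS :: "'a::finite set \<Rightarrow> ('a \<Rightarrow> real) \<Rightarrow> real^'a" where
  "vS S h = (\<chi> j. if j \<in> S then h j else 0)"

lemma inner_vS: "vS S h \<bullet> vS S k = (\<Sum>j\<in>S. h j * k j)"
proof -
  have "vS S h \<bullet> vS S k = (\<Sum>j\<in>UNIV. (if j \<in> S then h j * k j else 0))"
    unfolding vS_def inner_vec_def by (intro sum.cong) auto
  also have "\<dots> = (\<Sum>j\<in>S. h j * k j)" by (simp add: sum.If_cases)
  finally show ?thesis .
qed

lemma norm_vS: "(norm (vS S h))\<^sup>2 = (\<Sum>j\<in>S. (h j)\<^sup>2)"
  unfolding power2_norm_eq_inner inner_vS by (simp add: power2_eq_square)

lemma vS_comp: "vS S h $ j = (if j \<in> S then h j else 0)" unfolding vS_def by simp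

lemma dim_sub: "dim {x::real^'a::finite. \<forall>i. i \<notin> S \<longrightarrow> x$i = 0} = card S"
proof -
  define d where "d = (\<lambda>i. axis i (1::real)) ` S"
  have dB: "d \<subseteq> Basis" unfolding d_def by (auto simp: axis_in_Basis_iff)
  have eq: "{x::real^'a. \<forall>i. i \<notin> S \<longrightarrow> x$i = 0} = {x. \<forall>i\<in>Basis. i \<notin> d \<longrightarrow> x \<bullet> i = 0}"
  proof -
    have "(\<forall>i. i \<notin> S \<longrightarrow> x$i = 0) \<longleftrightarrow> (\<forall>i\<in>Basis. i \<notin> d \<longrightarrow> x \<bullet> i = 0)" for x :: "real^'a"
      unfolding d_def Basis_vec_def Basis_real_def by (auto simp: inner_axis axis_eq_axis)
    thus ?thesis by auto
  qed
  have "card d = card S" unfolding d_def by (rule card_image) (auto simp: inj_on_def axis_eq_axis)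
  thus ?thesis using eq dim_substandard[OF dB] by simp
qed

lemma parseval:
  fixes S :: "'a::finite set" and r :: "nat \<Rightarrow> 'a \<Rightarrow> real" and D :: "'a \<Rightarrow> real"
  assumes orth: "\<And>p q. p < card S - 1 \<Longrightarrow> q < card S - 1 \<Longrightarrow> (\<Sum>j\<in>S. r p j * r q j) = (if p = q then 1 else 0)"
    and zs: "\<And>p. p < card S - 1 \<Longrightarrow> (\<Sum>j\<in>S. r p j) = 0"
    and D0: "(\<Sum>j\<in>S. D j) = 0" and ne: "S \<noteq> {}"
  shows "(\<Sum>p<card S - 1. (\<Sum>j\<in>S. r p j * D j)\<^sup>2) = (\<Sum>j\<in>S. (D j)\<^sup>2)"
proof -
  define n where "n = card S"
  have n1: "n \<ge> 1" using ne unfolding n_def by (simp add: Suc_leI card_gt_0_iff)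
  define u where "u p = vS S (r p)" for p
  define ov where "ov = vS S (\<lambda>_. 1 / sqrt n)"
  have uu: "u p \<bullet> u q = (if p = q then 1 else 0)" if "p < n - 1" "q < n - 1" for p q
    unfolding u_def inner_vS using orth that n_def by simp
  have uo: "u p \<bullet> ov = 0" if "p < n - 1" for p
    unfolding u_def ov_def inner_vS using zs[of p] that n_def by (simp add: sum_divide_distrib[symmetric])
  have oo: "ov \<bullet> ov = 1" unfolding ov_def inner_vS using n1 n_def ne
    by (simp add: real_sqrt_mult[symmetric])
  have inj: "inj_on u {..<n-1}"
  proof (rule inj_onI)
    fix p q assume pq: "p \<in> {..<n-1}" "q \<in> {..<n-1}" "u p = u q"
    show "p = q" using uu[of p q] uu[of p p] pq by (auto split: if_splits)
  qed
  have onot: "ov \<notin> u ` {..<n-1}" using uo oo by force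
  define B where "B = u ` {..<n-1} \<union> {ov}"
  have finB: "finite B" unfolding B_def by simp
  have cardB: "card B = n"
    unfolding B_def using onot card_image[OF inj] n1 by (simp add: card_insert_if)
  have Bon: "b \<bullet> b' = (if b = b' then 1 else 0)" if "b \<in> B" "b' \<in> B" for b b'
    using that uu uo oo unfolding B_def by (auto simp: inner_commute)
  have indep: "independent B"
  proof (rule pairwise_orthogonal_independent)
    show "pairwise orthogonal B" unfolding pairwise_def orthogonal_def using Bon by auto
    show "0 \<notin> B" using Bon by force
  qed
  define V where "V = {x::real^'a. \<forall>i. i \<notin> S \<longrightarrow> x$i = 0}"
  have BV: "B \<subseteq> V" unfolding B_def V_def u_def ov_def vS_def by auto
  have "V \<subseteq> span B"
    using eucl.card_eq_dim[OF BV _ finB] indep cardB dim_sub[of S] unfolding V_def n_def by simp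
  moreover define x where "x = vS S D"
  ultimately have "x \<in> span B" unfolding V_def x_def vS_def by auto
  then obtain cc where cc: "x = (\<Sum>b\<in>B. cc b *\<^sub>R b)" using span_finite[OF finB] by auto
  have xb: "x \<bullet> b' = cc b'" if "b' \<in> B" for b'
  proof -
    have "x \<bullet> b' = (\<Sum>b\<in>B. cc b * (b \<bullet> b'))" unfolding cc by (simp add: inner_sum_left)
    also have "\<dots> = (\<Sum>b\<in>B. if b = b' then cc b else 0)" using Bon that by (intro sum.cong) auto
    also have "\<dots> = cc b'" using that finB by simp
    finally show ?thesis .
  qed
  have "x \<bullet> x = (\<Sum>b\<in>B. cc b * (b \<bullet> x))" unfolding cc[of] by (simp add: inner_sum_left)
  also have "\<dots> = (\<Sum>b\<in>B. (x \<bullet> b)\<^sup>2)" using xb by (intro sum.cong) (auto simp: inner_commute power2_eq_square)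
  also have "\<dots> = (\<Sum>b\<in>u ` {..<n-1}. (x \<bullet> b)\<^sup>2) + (x \<bullet> ov)\<^sup>2"
    unfolding B_def using onot by (simp add: sum.union_disjoint)
  also have "(x \<bullet> ov) = 0" unfolding x_def ov_def inner_vS using D0 by (simp add: sum_divide_distrib[symmetric])
  also have "(\<Sum>b\<in>u ` {..<n-1}. (x \<bullet> b)\<^sup>2) = (\<Sum>p<n-1. (x \<bullet> u p)\<^sup>2)"
    by (rule sum.reindex[OF inj, unfolded comp_def])
  finally have "x \<bullet> x = (\<Sum>p<n-1. (\<Sum>j\<in>S. r p j * D j)\<^sup>2)"
    unfolding x_def u_def inner_vS by (simp add: mult.commute)
  moreover have "x \<bullet> x = (\<Sum>j\<in>S. (D j)\<^sup>2)" unfolding x_def inner_vS by (simp add: power2_eq_square)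
  ultimately show ?thesis unfolding n_def by simp
qed


lemma conn_const:
  assumes conn: "graph_connected S E" and eq: "\<And>j l. j \<in> S \<Longrightarrow> l \<in> S \<Longrightarrow> E j l \<Longrightarrow> h j = h l"
    and uv: "u \<in> S" "v \<in> S"
  shows "h u = h v"
proof -
  have "(u, v) \<in> {(x, y). x \<in> S \<and> y \<in> S \<and> E x y}\<^sup>*" using conn uv unfolding graph_connected_def by blast
  thus ?thesis
  proof (induction rule: rtrancl_induct)
    case base then show ?case by simp
  next
    case (step y z) then show ?case using eq by auto
  qed
qed

lemma spectral_gap:
  fixes S :: "'a::finite set" and A :: "'a \<Rightarrow> 'a \<Rightarrow> real"
  assumes conn: "graph_connected S (\<lambda>u v. A u v > 0)" and nonneg: "\<And>a b. A a b \<ge> 0"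
  shows "\<exists>lg>0. \<forall>D. (\<Sum>j\<in>S. D j) = 0 \<longrightarrow> lg * (\<Sum>j\<in>S. (D j)\<^sup>2) \<le> (\<Sum>j\<in>S. \<Sum>l\<in>S. A j l * (D j - D l)\<^sup>2)"
proof -
  define Qf where "Qf x = (\<Sum>j\<in>S. \<Sum>l\<in>S. A j l * (x$j - x$l)\<^sup>2)" for x :: "real^'a"
  define K where "K = {x::real^'a. (\<forall>i. i \<notin> S \<longrightarrow> x$i = 0) \<and> (\<Sum>j\<in>S. x$j) = 0 \<and> norm x = 1}"
  have Qnn: "0 \<le> Qf x" for x unfolding Qf_def using nonneg by (intro sum_nonneg mult_nonneg_nonneg) auto
  have QvS: "Qf (vS S D) = (\<Sum>j\<in>S. \<Sum>l\<in>S. A j l * (D j - D l)\<^sup>2)" for D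
    unfolding Qf_def vS_comp by (intro sum.cong) auto
  have Qscale: "Qf (c *\<^sub>R x) = c\<^sup>2 * Qf x" for c x
  proof -
    have "(c * x $ j - c * x $ l)\<^sup>2 = c\<^sup>2 * (x $ j - x $ l)\<^sup>2" for j l
      by (simp add: power_mult_distrib[symmetric] right_diff_distrib)
    thus ?thesis unfolding Qf_def by (simp add: sum_distrib_left algebra_simps)
  qed
  have key: "\<exists>lg>0. \<forall>x\<in>K. lg \<le> Qf x"
  proof (cases "K = {}")
    case True thus ?thesis by (intro exI[of _ 1]) auto
  next
    case False
    have cl: "closed K" unfolding K_def
      by (intro closed_Collect_conj closed_Collect_all closed_Collect_imp closed_Collect_eq)
         (auto intro!: continuous_intros)
    have bd: "bounded K" unfolding bounded_iff K_def by auto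
    have cQ: "continuous_on K Qf" unfolding Qf_def by (intro continuous_intros)
    obtain x0 where x0: "x0 \<in> K" "\<And>x. x \<in> K \<Longrightarrow> Qf x0 \<le> Qf x"
      using continuous_attains_inf[OF compact_eq_bounded_closed[THEN iffD2, OF conjI[OF bd cl]] False cQ] by auto
    have "Qf x0 > 0"
    proof (rule ccontr)
      assume "\<not> Qf x0 > 0"
      hence Q0: "Qf x0 = 0" using Qnn[of x0] by simp
      have eq: "x0$j = x0$l" if "j \<in> S" "l \<in> S" "A j l > 0" for j l
      proof -
        have "\<forall>j\<in>S. (\<Sum>l\<in>S. A j l * (x0$j - x0$l)\<^sup>2) = 0"
          using Q0 unfolding Qf_def
          by (subst sum_nonneg_eq_0_iff[symmetric]) (auto intro!: sum_nonneg mult_nonneg_nonneg nonneg)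
        hence "\<forall>l\<in>S. A j l * (x0$j - x0$l)\<^sup>2 = 0" using that
          by (subst sum_nonneg_eq_0_iff[symmetric]) (auto intro!: mult_nonneg_nonneg nonneg)
        thus ?thesis using that by auto
      qed
      show False
      proof (cases "S = {}")
        case True
        hence "x0 = 0" using x0(1) unfolding K_def by (simp add: vec_eq_iff)
        thus False using x0(1) unfolding K_def by simp
      next
        case False
        then obtain u where u: "u \<in> S" by auto
        have c: "x0$v = x0$u" if "v \<in> S" for v using conn_const[OF conn, of "\<lambda>j. x0$j" v u] eq that u by auto
        have "(\<Sum>j\<in>S. x0$j) = card S * x0$u" using c by simp
        hence "x0$u = 0" using x0(1) False unfolding K_def by simp
        hence "x0 = 0" using c x0(1) unfolding K_def by (auto simp: vec_eq_iff)
        thus False using x0(1) unfolding K_def by simp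
      qed
    qed
    thus ?thesis using x0 by blast
  qed
  then obtain lg where lam: "lg > 0" "\<And>x. x \<in> K \<Longrightarrow> lg \<le> Qf x" by blast
  have "lg * (\<Sum>j\<in>S. (D j)\<^sup>2) \<le> (\<Sum>j\<in>S. \<Sum>l\<in>S. A j l * (D j - D l)\<^sup>2)" if D0: "(\<Sum>j\<in>S. D j) = 0" for D
  proof (cases "vS S D = 0")
    case True
    hence "(\<Sum>j\<in>S. (D j)\<^sup>2) = 0" using norm_vS[of S D] by simp
    thus ?thesis using Qnn[of "vS S D"] QvS by simp
  next
    case False
    define y where "y = (1 / norm (vS S D)) *\<^sub>R vS S D"
    have ny: "norm (vS S D) > 0" using False by simp
    have "y \<in> K" unfolding K_def y_def using D0 ny
      by (auto simp: vS_comp sum_divide_distrib[symmetric])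
    hence "lg \<le> Qf y" by (rule lam)
    also have "Qf y = Qf (vS S D) / (norm (vS S D))\<^sup>2" unfolding y_def Qscale
      by (simp add: power_divide)
    finally have "lg * (norm (vS S D))\<^sup>2 \<le> Qf (vS S D)" using ny by (simp add: field_simps)
    thus ?thesis using norm_vS[of S D] QvS by simp
  qed
  thus ?thesis using lam(1) by blast
qed


locale game =
  fixes N :: nat and j0 :: nat and c :: "'a::finite \<Rightarrow> nat"
    and f :: "'a \<Rightarrow> real^'a \<Rightarrow> real" and A :: "'a \<Rightarrow> 'a \<Rightarrow> real"
    and dbar :: "'a \<Rightarrow> real" and xs :: "real^'a" and R :: "'a \<Rightarrow> 'a \<Rightarrow> nat \<Rightarrow> real"
    and Df :: "'a \<Rightarrow> real^'a \<Rightarrow> ((real^'a) \<Rightarrow>\<^sub>L real)"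
    and D2f :: "'a \<Rightarrow> real^'a \<Rightarrow> ((real^'a) \<Rightarrow>\<^sub>L ((real^'a) \<Rightarrow>\<^sub>L real))"
  assumes Df: "\<And>a x. (f a has_derivative blinfun_apply (Df a x)) (at x)"
    and D2f: "\<And>a x. (Df a has_derivative blinfun_apply (D2f a x)) (at x)"
    and D2cont: "\<And>a. continuous_on UNIV (D2f a)"
    and coal: "\<forall>a. c a < N"
    and mj0: "card {a. c a = j0} = 1"
    and A2: "\<forall>x y. x \<noteq> y \<longrightarrow> (x - y) \<bullet> (pseudo_gradient f c x - pseudo_gradient f c y) > 0"
    and NE: "is_NE N f c xs"
    and A_sym: "\<forall>a b. A a b = A b a" and A_nonneg: "\<forall>a b. A a b \<ge> 0"
    and GC_conn: "\<forall>k. c k \<noteq> j0 \<longrightarrow> graph_connected (nbhd f c k) (\<lambda>u v. A u v > 0)"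
    and dbar_pos: "\<forall>a. dbar a > 0"
    and Rv: "valid_R f c R"
begin

abbreviation nb where "nb k \<equiv> nbhd f c k"
abbreviation P where "P \<equiv> pseudo_gradient f c"
definition nk :: "'a \<Rightarrow> real" where "nk k = real (card (nb k))"

lemma interf_sym: "interf f c a b \<longleftrightarrow> interf f c b a"
  unfolding interf_def by auto

lemma nb_self: "k \<in> nb k" unfolding nbhd_def by simp
lemma nb_sym: "j \<in> nb k \<longleftrightarrow> k \<in> nb j" unfolding nbhd_def using interf_sym by auto
lemma nb_coal: "j \<in> nb k \<Longrightarrow> c j = c k" unfolding nbhd_def interf_def by auto
lemma nb_ne: "nb k \<noteq> {}" using nb_self by auto
lemma nk_ge1: "nk k \<ge> 1" unfolding nk_def using nb_ne by (simp add: Suc_leI card_gt_0_iff)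
lemma nk_pos: "nk k > 0" using nk_ge1[of k] by simp
lemma nk_le: "nk k \<le> real CARD('a)" unfolding nk_def by (simp add: card_mono)

lemma nb_j0: assumes "c k = j0" shows "nb k = {k}"
proof -
  have "\<not> interf f c k b" for b
  proof
    assume "interf f c k b"
    hence "b \<noteq> k" "c b = j0" using assms unfolding interf_def by auto
    hence "{k, b} \<subseteq> {a. c a = j0}" using assms by auto
    hence "card {k, b} \<le> 1" using mj0 card_mono[of "{a. c a = j0}"] by simp
    thus False using \<open>b \<noteq> k\<close> by simp
  qed
  thus ?thesis unfolding nbhd_def by auto
qed

lemma pd: "partial_deriv (f j) k x = Df j x (axis k 1)"
  by (rule pd_eq[OF Df])

lemma P_comp: "P x $ k = (\<Sum>j\<in>nb k. Df j x (axis k 1))"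
proof -
  have "P x $ k = partial_deriv (coalition_cost f c (c k)) k x"
    unfolding pseudo_gradient_def by simp
  also have "\<dots> = (\<Sum>a\<in>{a. c a = c k}. Df a x (axis k 1))"
    by (rule pd_eq[OF coal_deriv[OF Df]])
  also have "\<dots> = (\<Sum>j\<in>nb k. Df j x (axis k 1))"
  proof (rule sum.mono_neutral_right)
    show "nb k \<subseteq> {a. c a = c k}" using nb_coal by auto
    show "\<forall>a\<in>{a. c a = c k} - nb k. Df a x (axis k 1) = 0"
    proof
      fix a assume a: "a \<in> {a. c a = c k} - nb k"
      hence "\<not> depends_on (f a) k" unfolding nbhd_def interf_def by auto
      thus "Df a x (axis k 1) = 0" using pd_zero[of "f a" k x] pd by simp
    qed
  qed auto
  finally show ?thesis .
qed

lemma P_repr: "P x = (\<chi> k. \<Sum>j\<in>nb k. Df j x (axis k 1))"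
  by (simp add: vec_eq_iff P_comp)

lemma P_cont: "continuous_on S P"
  unfolding P_repr
  by (intro continuous_on_vec_lambda continuous_on_sum Df_cont[OF D2f])

lemma P_xs: "P xs = 0"
proof -
  have "P xs $ k = 0" for k
  proof -
    define i where "i = c k"
    have G: "(coalition_cost f c i has_derivative (\<lambda>h. \<Sum>a\<in>{a. c a = i}. Df a xs h)) (at xs)"
      by (rule coal_deriv[OF Df])
    have d: "((\<lambda>s. coalition_cost f c i (xs + s *\<^sub>R axis k 1)) has_real_derivative (\<Sum>a\<in>{a. c a = i}. Df a xs (axis k 1))) (at 0)"
      using line_deriv[OF G] .
    have mn: "\<forall>y. \<bar>0 - y\<bar> < 1 \<longrightarrow> coalition_cost f c i (xs + 0 *\<^sub>R axis k 1) \<le> coalition_cost f c i (xs + y *\<^sub>R axis k 1)"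
    proof (intro allI impI)
      fix s :: real
      have "\<forall>a. c a \<noteq> i \<longrightarrow> (xs + s *\<^sub>R axis k 1) $ a = xs $ a"
        unfolding i_def by (auto simp: axis_def)
      moreover have "i < N" unfolding i_def using coal by auto
      ultimately show "coalition_cost f c i (xs + 0 *\<^sub>R axis k 1) \<le> coalition_cost f c i (xs + s *\<^sub>R axis k 1)"
        using NE unfolding is_NE_def by auto
    qed
    have "(\<Sum>a\<in>{a. c a = i}. Df a xs (axis k 1)) = 0"
      using DERIV_local_min[OF d _ mn] by simp
    moreover have "P xs $ k = partial_deriv (coalition_cost f c i) k xs"
      unfolding pseudo_gradient_def i_def by simp
    ultimately show ?thesis using pd_eq[OF G] by simp
  qed
  thus ?thesis by (simp add: vec_eq_iff)
qed

lemma Qpos: "e \<noteq> 0 \<Longrightarrow> e \<bullet> P (xs + e) > 0"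
  using A2[rule_format, of "xs + e" xs] P_xs by simp


lemma spec_ex: "\<exists>lg>0. \<forall>k D. (\<Sum>j\<in>nb k. D j) = 0 \<longrightarrow> lg * (\<Sum>j\<in>nb k. (D j)\<^sup>2) \<le> (\<Sum>j\<in>nb k. \<Sum>l\<in>nb k. A j l * (D j - D l)\<^sup>2)"
proof -
  have "\<forall>k. \<exists>lg>0. \<forall>D. (\<Sum>j\<in>nb k. D j) = 0 \<longrightarrow> lg * (\<Sum>j\<in>nb k. (D j)\<^sup>2) \<le> (\<Sum>j\<in>nb k. \<Sum>l\<in>nb k. A j l * (D j - D l)\<^sup>2)"
  proof
    fix k
    have "graph_connected (nb k) (\<lambda>u v. A u v > 0)"
    proof (cases "c k = j0")
      case True thus ?thesis using nb_j0[OF True] unfolding graph_connected_def by auto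
    next
      case False thus ?thesis using GC_conn by auto
    qed
    thus "\<exists>lg>0. \<forall>D. (\<Sum>j\<in>nb k. D j) = 0 \<longrightarrow> lg * (\<Sum>j\<in>nb k. (D j)\<^sup>2) \<le> (\<Sum>j\<in>nb k. \<Sum>l\<in>nb k. A j l * (D j - D l)\<^sup>2)"
      by (rule spectral_gap) (use A_nonneg in auto)
  qed
  hence "\<exists>lgk. \<forall>k. lgk k > 0 \<and> (\<forall>D. (\<Sum>j\<in>nb k. D j) = 0 \<longrightarrow> lgk k * (\<Sum>j\<in>nb k. (D j)\<^sup>2) \<le> (\<Sum>j\<in>nb k. \<Sum>l\<in>nb k. A j l * (D j - D l)\<^sup>2))"
    by (rule choice)
  then obtain lgk where lgk0: "\<forall>k. lgk k > 0 \<and> (\<forall>D. (\<Sum>j\<in>nb k. D j) = 0 \<longrightarrow> lgk k * (\<Sum>j\<in>nb k. (D j)\<^sup>2) \<le> (\<Sum>j\<in>nb k. \<Sum>l\<in>nb k. A j l * (D j - D l)\<^sup>2))"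
    by blast
  have lgk: "\<And>k. lgk k > 0"
    "\<And>k D. (\<Sum>j\<in>nb k. D j) = 0 \<Longrightarrow> lgk k * (\<Sum>j\<in>nb k. (D j)\<^sup>2) \<le> (\<Sum>j\<in>nb k. \<Sum>l\<in>nb k. A j l * (D j - D l)\<^sup>2)"
    using lgk0 by auto
  define lg where "lg = Min (range lgk)"
  have lgpos: "lg > 0" unfolding lg_def using lgk(1) by auto
  have "lg * (\<Sum>j\<in>nb k. (D j)\<^sup>2) \<le> (\<Sum>j\<in>nb k. \<Sum>l\<in>nb k. A j l * (D j - D l)\<^sup>2)"
    if "(\<Sum>j\<in>nb k. D j) = 0" for k D
  proof -
    have "lg \<le> lgk k" unfolding lg_def by auto
    hence "lg * (\<Sum>j\<in>nb k. (D j)\<^sup>2) \<le> lgk k * (\<Sum>j\<in>nb k. (D j)\<^sup>2)"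
      by (intro mult_right_mono sum_nonneg) auto
    thus ?thesis using lgk(2)[OF that] by simp
  qed
  thus ?thesis using lgpos by blast
qed

definition lam :: real where
  "lam = (SOME lg. lg > 0 \<and> (\<forall>k D. (\<Sum>j\<in>nb k. D j) = 0 \<longrightarrow> lg * (\<Sum>j\<in>nb k. (D j)\<^sup>2) \<le> (\<Sum>j\<in>nb k. \<Sum>l\<in>nb k. A j l * (D j - D l)\<^sup>2)))"

lemma lam_pos: "lam > 0" and lam_spec: "(\<Sum>j\<in>nb k. D j) = 0 \<Longrightarrow> lam * (\<Sum>j\<in>nb k. (D j)\<^sup>2) \<le> (\<Sum>j\<in>nb k. \<Sum>l\<in>nb k. A j l * (D j - D l)\<^sup>2)"
  using someI_ex[OF spec_ex] unfolding lam_def[symmetric] by auto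

definition wt :: "'a \<Rightarrow> real" where "wt a = nk a / dbar a"
lemma wt_pos: "wt a > 0" unfolding wt_def using nk_pos dbar_pos by simp

end


lemma young: assumes "e > 0" shows "2 * a * b \<le> e * a\<^sup>2 + b\<^sup>2 / (e::real)"
proof -
  have "0 \<le> (e * a - b)\<^sup>2 / e" using assms by simp
  also have "(e * a - b)\<^sup>2 / e = e * a\<^sup>2 + b\<^sup>2 / e - 2 * a * b"
    using assms by (simp add: power2_eq_square field_simps)
  finally show ?thesis by simp
qed


lemma antisym_sum:
  fixes A :: "'a \<Rightarrow> 'a \<Rightarrow> real"
  assumes "\<forall>a b. A a b = A b a"
  shows "(\<Sum>j\<in>S. \<Sum>l\<in>S. A j l * (h j - h l)) = 0"
proof -
  have "(\<Sum>j\<in>S. \<Sum>l\<in>S. A j l * h l) = (\<Sum>l\<in>S. \<Sum>j\<in>S. A j l * h l)" by (rule sum.swap)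
  also have "\<dots> = (\<Sum>j\<in>S. \<Sum>l\<in>S. A j l * h j)" using assms by (metis (no_types, lifting) sum.cong)
  finally show ?thesis by (simp add: right_diff_distrib sum_subtractf)
qed

lemma sym_sq_sum:
  fixes A :: "'a \<Rightarrow> 'a \<Rightarrow> real"
  assumes "\<forall>a b. A a b = A b a"
  shows "(\<Sum>j\<in>S. \<Sum>l\<in>S. A j l * (D j - D l)\<^sup>2) = 2 * (\<Sum>j\<in>S. D j * (\<Sum>l\<in>S. A j l * (D j - D l)))"
proof -
  have sq: "A j l * (D j - D l)\<^sup>2 = D j * (A j l * (D j - D l)) + D l * (A l j * (D l - D j))" for j l
    using assms by (simp add: power2_eq_square algebra_simps)
  have "(\<Sum>j\<in>S. \<Sum>l\<in>S. A j l * (D j - D l)\<^sup>2) =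
        (\<Sum>j\<in>S. \<Sum>l\<in>S. D j * (A j l * (D j - D l))) + (\<Sum>j\<in>S. \<Sum>l\<in>S. D l * (A l j * (D l - D j)))"
    unfolding sq by (simp add: sum.distrib)
  also have "(\<Sum>j\<in>S. \<Sum>l\<in>S. D l * (A l j * (D l - D j))) = (\<Sum>l\<in>S. \<Sum>j\<in>S. D l * (A l j * (D l - D j)))"
    by (rule sum.swap)
  finally show ?thesis by (simp add: sum_distrib_left)
qed

context game begin

lemma Qcont: "continuous_on UNIV (\<lambda>e. P (xs + e))"
  by (rule continuous_on_compose2[OF P_cont[of UNIV]]) (auto intro!: continuous_intros)

sublocale OS: omega_setup "\<lambda>e. P (xs + e)" wt "lam/4"
  by unfold_locales (use Qcont Qpos wt_pos lam_pos in auto)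

definition rho0 :: "real \<Rightarrow> real" where "rho0 Rb = sqrt (Rb / OS.wmin)"

lemma bound_ex: assumes "continuous_on UNIV h" shows "\<exists>M\<ge>0. \<forall>y\<in>cball xs r. norm (h y :: 'b::real_normed_vector) \<le> M"
proof -
  have "compact (h ` cball xs r)" by (rule compact_continuous_image[OF continuous_on_subset[OF assms]]) auto
  then obtain M where "\<forall>z\<in>h ` cball xs r. norm z \<le> M" using compact_imp_bounded bounded_iff by metis
  thus ?thesis by (intro exI[of _ "max M 0"]) auto
qed

definition Pm :: "real \<Rightarrow> real" where "Pm Rb = (SOME M. M \<ge> 0 \<and> (\<forall>y\<in>cball xs (rho0 Rb). norm (P y) \<le> M))"
lemma Pm: "Pm Rb \<ge> 0" "y \<in> cball xs (rho0 Rb) \<Longrightarrow> norm (P y) \<le> Pm Rb"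
  using someI_ex[OF bound_ex[OF P_cont, of "rho0 Rb"]] unfolding Pm_def[symmetric] by auto

definition Hm :: "real \<Rightarrow> real" where "Hm Rb = (SOME M. M \<ge> 0 \<and> (\<forall>y\<in>cball xs (rho0 Rb). norm (\<Sum>j\<in>UNIV. norm (D2f j y)) \<le> M))"
lemma Hm: "Hm Rb \<ge> 0" "y \<in> cball xs (rho0 Rb) \<Longrightarrow> norm (D2f j y) \<le> Hm Rb"
proof -
  have c: "continuous_on UNIV (\<lambda>y. \<Sum>j\<in>UNIV. norm (D2f j y))"
    by (intro continuous_intros continuous_on_subset[OF D2cont]) auto
  have H: "Hm Rb \<ge> 0 \<and> (\<forall>y\<in>cball xs (rho0 Rb). norm (\<Sum>j\<in>UNIV. norm (D2f j y)) \<le> Hm Rb)"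
    using someI_ex[OF bound_ex[OF c, of "rho0 Rb"]] unfolding Hm_def[symmetric] by auto
  thus "Hm Rb \<ge> 0" by simp
  assume y: "y \<in> cball xs (rho0 Rb)"
  have "norm (D2f j y) \<le> (\<Sum>j\<in>UNIV. norm (D2f j y))" by (rule member_le_sum) auto
  also have "\<dots> \<le> Hm Rb"
  proof -
    have "\<bar>\<Sum>j\<in>UNIV. norm (D2f j y)\<bar> \<le> Hm Rb" using H y by simp
    thus ?thesis by linarith
  qed
  finally show "norm (D2f j y) \<le> Hm Rb" .
qed

definition Nc :: real where "Nc = real CARD('a)"
definition Kx :: "real \<Rightarrow> real" where "Kx Rb = (\<Sum>a\<in>UNIV. dbar a * (1 + Rb + Pm Rb))"
definition K3 :: "real \<Rightarrow> real" where
  "K3 Rb = (2/lam) * Nc\<^sup>2 * (Hm Rb * Kx Rb)\<^sup>2 + (4/lam) * Nc\<^sup>2 * Rb / OS.wmin"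

end

locale traj = game +
  fixes \<delta> :: real and T :: real and x :: "real \<Rightarrow> real^'a" and w :: "real \<Rightarrow> 'a \<Rightarrow> 'a \<Rightarrow> real"
  assumes sol: "seeking_solution f c A (\<lambda>a. \<delta> * dbar a) T x w" and dpos: "0 < \<delta>" and dle: "\<delta> \<le> 1"
begin

definition g where "g t j k = gterm f (w t) (x t) j k"
definition xd where "xd t = (\<chi> a. - (\<delta> * dbar a) * g t a a)"
definition wd where "wd t j k = - (\<Sum>l\<in>nb k. A j l * (g t j k - g t l k))"
definition hd where "hd t j k = D2f j (x t) (xd t) (axis k 1)"
definition gd where "gd t j k = wd t j k + hd t j k"

lemma xder: "t \<in> {0..<T} \<Longrightarrow> (x has_vector_derivative xd t) (at t within {0..<T})"
  using sol unfolding seeking_solution_def xd_def g_def by auto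

lemma wder: "t \<in> {0..<T} \<Longrightarrow> k \<in> nb j \<Longrightarrow> ((\<lambda>s. w s j k) has_real_derivative wd t j k) (at t within {0..<T})"
  using sol unfolding seeking_solution_def wd_def g_def by auto

lemma w0: "k \<in> nb j \<Longrightarrow> w 0 j k = 0"
  using sol unfolding seeking_solution_def by auto

lemma g_eq: "g t j k = w t j k + Df j (x t) (axis k 1)"
  unfolding g_def gterm_def pd by simp

lemma gder: assumes "t \<in> {0..<T}" "k \<in> nb j"
  shows "((\<lambda>s. g s j k) has_real_derivative gd t j k) (at t within {0..<T})"
  unfolding g_eq gd_def hd_def
  by (intro DERIV_add wder[OF assms] curve_deriv[of "Df j" "D2f j", OF D2f xder[OF assms(1)]])

lemma xcomp_der: "t \<in> {0..<T} \<Longrightarrow> ((\<lambda>s. x s $ a) has_real_derivative xd t $ a) (at t within {0..<T})"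
  unfolding has_real_derivative_iff_has_vector_derivative
  by (rule bounded_linear.has_vector_derivative[OF bounded_linear_vec_nth xder])

lemma cons: assumes t: "t \<in> {0..<T}" shows "(\<Sum>j\<in>nb k. w t j k) = 0"
proof -
  have "\<exists>C. \<forall>s\<in>{0..<T}. (\<Sum>j\<in>nb k. w s j k) = C"
  proof (rule has_derivative_zero_constant)
    fix s assume s: "s \<in> {0..<T}"
    have "((\<lambda>s. \<Sum>j\<in>nb k. w s j k) has_real_derivative (\<Sum>j\<in>nb k. wd s j k)) (at s within {0..<T})"
      by (rule DERIV_sum) (use wder[OF s] nb_sym in auto)
    moreover have "(\<Sum>j\<in>nb k. wd s j k) = 0"
      unfolding wd_def using antisym_sum[OF A_sym, where S="nb k" and h="\<lambda>j. g s j k"] by (simp add: sum_negf)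
    moreover have "(*) (0::real) = (\<lambda>h. 0)" by auto
    ultimately show "((\<lambda>s. \<Sum>j\<in>nb k. w s j k) has_derivative (\<lambda>h. 0)) (at s within {0..<T})"
      by (simp add: has_field_derivative_def)
  qed simp
  then obtain C where C: "\<forall>s\<in>{0..<T}. (\<Sum>j\<in>nb k. w s j k) = C" by blast
  have "0 \<in> {0..<T}" using t by auto
  hence "C = (\<Sum>j\<in>nb k. w 0 j k)" using C by simp
  also have "\<dots> = 0" using w0 nb_sym by simp
  finally show ?thesis using C t by simp
qed

lemma sum_g: "t \<in> {0..<T} \<Longrightarrow> (\<Sum>j\<in>nb k. g t j k) = P (x t) $ k"
  unfolding g_eq sum.distrib using cons P_comp by simp

definition Dv where "Dv t j k = g t j k - (\<Sum>l\<in>nb k. g t l k) / nk k"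

lemma sumDv: "(\<Sum>j\<in>nb k. Dv t j k) = 0"
  unfolding Dv_def using nk_pos[of k] by (simp add: sum_subtractf nk_def)

lemma Dv_j0: "c k = j0 \<Longrightarrow> Dv t k k = 0"
  unfolding Dv_def nk_def using nb_j0 by simp

lemma g_aa: "t \<in> {0..<T} \<Longrightarrow> g t a a = Dv t a a + P (x t) $ a / nk a"
  unfolding Dv_def using sum_g by simp


definition Dvd where "Dvd t j k = gd t j k - (\<Sum>l\<in>nb k. gd t l k) / nk k"

lemma Dvder: assumes "t \<in> {0..<T}" "j \<in> nb k"
  shows "((\<lambda>s. Dv s j k) has_real_derivative Dvd t j k) (at t within {0..<T})"
  unfolding Dv_def[abs_def] Dvd_def
  apply (intro DERIV_diff DERIV_cdivide gder DERIV_sum)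
  using assms nb_sym nk_pos[of k] by auto

definition U where "U t = (\<Sum>k\<in>UNIV. \<Sum>j\<in>nb k. (Dv t j k)\<^sup>2)"
definition Ud where "Ud t = (\<Sum>k\<in>UNIV. \<Sum>j\<in>nb k. 2 * Dv t j k * Dvd t j k)"

lemma Uder: assumes "t \<in> {0..<T}" shows "(U has_real_derivative Ud t) (at t within {0..<T})"
  unfolding U_def[abs_def] Ud_def
proof (intro DERIV_sum)
  fix k j assume j: "j \<in> nb k"
  show "((\<lambda>s. (Dv s j k)\<^sup>2) has_real_derivative 2 * Dv t j k * Dvd t j k) (at t within {0..<T})"
    by (rule DERIV_cong[OF DERIV_power[OF Dvder[OF assms j], of 2]]) (simp add: power2_eq_square algebra_simps)
qed

definition V where "V t = (\<Sum>a\<in>UNIV. wt a * (x t $ a - xs $ a)\<^sup>2)"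
definition Vd where "Vd t = (\<Sum>a\<in>UNIV. wt a * (2 * (x t $ a - xs $ a) * xd t $ a))"

lemma Vder: assumes "t \<in> {0..<T}" shows "(V has_real_derivative Vd t) (at t within {0..<T})"
  unfolding V_def[abs_def] Vd_def
proof (intro DERIV_sum DERIV_cmult)
  fix a
  show "((\<lambda>s. (x s $ a - xs $ a)\<^sup>2) has_real_derivative 2 * (x t $ a - xs $ a) * xd t $ a) (at t within {0..<T})"
    by (rule DERIV_cong[OF DERIV_power[where n=2, OF DERIV_diff[OF xcomp_der[OF assms] DERIV_const]]])
       (simp add: power2_eq_square algebra_simps)
qed

lemma U_nonneg: "0 \<le> U t" unfolding U_def by (intro sum_nonneg) auto

lemma Ud_eq: "Ud t = (\<Sum>k\<in>UNIV. \<Sum>j\<in>nb k. 2 * Dv t j k * gd t j k)"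
proof -
  have "(\<Sum>j\<in>nb k. 2 * Dv t j k * Dvd t j k) = (\<Sum>j\<in>nb k. 2 * Dv t j k * gd t j k)" for k
  proof -
    define M where "M = (\<Sum>l\<in>nb k. gd t l k) / nk k"
    have "(\<Sum>j\<in>nb k. 2 * Dv t j k * Dvd t j k) = (\<Sum>j\<in>nb k. 2 * Dv t j k * gd t j k - 2 * M * Dv t j k)"
      unfolding Dvd_def M_def[symmetric] by (intro sum.cong) (auto simp: algebra_simps)
    also have "\<dots> = (\<Sum>j\<in>nb k. 2 * Dv t j k * gd t j k) - 2 * M * (\<Sum>j\<in>nb k. Dv t j k)"
      by (simp add: sum_subtractf sum_distrib_left)
    finally have "(\<Sum>j\<in>nb k. 2 * Dv t j k * Dvd t j k) = (\<Sum>j\<in>nb k. 2 * Dv t j k * gd t j k)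
           - 2 * M * (\<Sum>j\<in>nb k. Dv t j k)" .
    thus ?thesis using sumDv by simp
  qed
  thus ?thesis unfolding Ud_def by simp
qed

lemma wd_Dv: "wd t j k = - (\<Sum>l\<in>nb k. A j l * (Dv t j k - Dv t l k))"
  unfolding wd_def Dv_def by simp

lemma Ud_le: "Ud t \<le> - lam * U t + (\<Sum>k\<in>UNIV. \<Sum>j\<in>nb k. 2 * Dv t j k * hd t j k)"
proof -
  have "(\<Sum>j\<in>nb k. 2 * Dv t j k * gd t j k) \<le> - lam * (\<Sum>j\<in>nb k. (Dv t j k)\<^sup>2) + (\<Sum>j\<in>nb k. 2 * Dv t j k * hd t j k)" for k
  proof -
    have "(\<Sum>j\<in>nb k. 2 * Dv t j k * gd t j k) = - (2 * (\<Sum>j\<in>nb k. Dv t j k * (\<Sum>l\<in>nb k. A j l * (Dv t j k - Dv t l k)))) + (\<Sum>j\<in>nb k. 2 * Dv t j k * hd t j k)"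
    proof -
      have "(\<Sum>j\<in>nb k. 2 * Dv t j k * gd t j k) = (\<Sum>j\<in>nb k. - (2 * (Dv t j k * (\<Sum>l\<in>nb k. A j l * (Dv t j k - Dv t l k)))) + 2 * Dv t j k * hd t j k)"
        unfolding gd_def wd_Dv by (intro sum.cong) (auto simp: algebra_simps)
      also have "\<dots> = - (2 * (\<Sum>j\<in>nb k. Dv t j k * (\<Sum>l\<in>nb k. A j l * (Dv t j k - Dv t l k)))) + (\<Sum>j\<in>nb k. 2 * Dv t j k * hd t j k)"
        by (simp add: sum.distrib sum_negf sum_distrib_left sum_subtractf)
      finally show ?thesis .
    qed
    also have "2 * (\<Sum>j\<in>nb k. Dv t j k * (\<Sum>l\<in>nb k. A j l * (Dv t j k - Dv t l k))) = (\<Sum>j\<in>nb k. \<Sum>l\<in>nb k. A j l * (Dv t j k - Dv t l k)\<^sup>2)"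
      using sym_sq_sum[OF A_sym, where S="nb k" and D="\<lambda>j. Dv t j k"] by simp
    also have "lam * (\<Sum>j\<in>nb k. (Dv t j k)\<^sup>2) \<le> \<dots>" by (rule lam_spec[OF sumDv])
    ultimately show ?thesis by linarith
  qed
  hence "Ud t \<le> (\<Sum>k\<in>UNIV. - lam * (\<Sum>j\<in>nb k. (Dv t j k)\<^sup>2) + (\<Sum>j\<in>nb k. 2 * Dv t j k * hd t j k))"
    unfolding Ud_eq by (intro sum_mono) auto
  thus ?thesis unfolding U_def by (simp add: sum.distrib sum_distrib_left)
qed


lemma Vd_eq: assumes "t \<in> {0..<T}"
  shows "Vd t = - 2 * \<delta> * ((x t - xs) \<bullet> P (x t)) - (\<Sum>a\<in>UNIV. 2 * Dv t a a * (\<delta> * nk a * (x t $ a - xs $ a)))"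
proof -
  have "wt a * (2 * (x t $ a - xs $ a) * xd t $ a) = - 2 * \<delta> * ((x t $ a - xs $ a) * P (x t) $ a) - 2 * Dv t a a * (\<delta> * nk a * (x t $ a - xs $ a))" for a
  proof -
    have xa: "xd t $ a = -(\<delta> * dbar a) * g t a a" by (simp add: xd_def)
    have w: "wt a * dbar a = nk a" unfolding wt_def using dbar_pos[rule_format, of a] by simp
    have ng: "nk a * g t a a = nk a * Dv t a a + P (x t) $ a" using g_aa[OF assms, of a] nk_pos[of a] by (simp add: field_simps)
    have "wt a * (2 * (x t $ a - xs $ a) * xd t $ a) = - 2 * \<delta> * (x t $ a - xs $ a) * ((wt a * dbar a) * g t a a)"
      unfolding xa by (simp add: algebra_simps)
    also have "\<dots> = - 2 * \<delta> * (x t $ a - xs $ a) * (nk a * g t a a)" by (simp add: w)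
    also have "\<dots> = - 2 * \<delta> * (x t $ a - xs $ a) * (nk a * Dv t a a + P (x t) $ a)" by (simp add: ng)
    finally show ?thesis by (simp add: algebra_simps)
  qed
  hence "Vd t = (\<Sum>a\<in>UNIV. - 2 * \<delta> * ((x t $ a - xs $ a) * P (x t) $ a) - 2 * Dv t a a * (\<delta> * nk a * (x t $ a - xs $ a)))"
    unfolding Vd_def by simp
  also have "\<dots> = - 2 * \<delta> * (\<Sum>a\<in>UNIV. (x t $ a - xs $ a) * P (x t) $ a) - (\<Sum>a\<in>UNIV. 2 * Dv t a a * (\<delta> * nk a * (x t $ a - xs $ a)))"
    by (simp add: sum_subtractf sum_distrib_left)
  also have "(\<Sum>a\<in>UNIV. (x t $ a - xs $ a) * P (x t) $ a) = (x t - xs) \<bullet> P (x t)"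
    by (simp add: inner_vec_def)
  finally show ?thesis .
qed

lemma diag_le_U: "(\<Sum>a\<in>UNIV. (Dv t a a)\<^sup>2) \<le> U t"
  unfolding U_def
  by (intro sum_mono member_le_sum) (auto simp: nb_self)

lemma Wd_raw: assumes "t \<in> {0..<T}"
  shows "Vd t + Ud t \<le> - 2 * \<delta> * ((x t - xs) \<bullet> P (x t)) - (lam/4) * U t
     + (4/lam) * \<delta>\<^sup>2 * (\<Sum>a\<in>UNIV. (nk a * (x t $ a - xs $ a))\<^sup>2) + (2/lam) * (\<Sum>k\<in>UNIV. \<Sum>j\<in>nb k. (hd t j k)\<^sup>2)"
proof -
  have l4: "lam/4 > 0" using lam_pos by simp
  have l2: "lam/2 > 0" using lam_pos by simp
  have "- (\<Sum>a\<in>UNIV. 2 * Dv t a a * (\<delta> * nk a * (x t $ a - xs $ a))) \<le>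
        (\<Sum>a\<in>UNIV. (lam/4) * (Dv t a a)\<^sup>2 + (\<delta> * nk a * (x t $ a - xs $ a))\<^sup>2 / (lam/4))"
    unfolding sum_negf[symmetric]
    by (intro sum_mono) (use young[OF l4, of "Dv t _ _" "- (\<delta> * nk _ * (x t $ _ - xs $ _))"] in \<open>auto simp: power2_eq_square\<close>)
  also have "\<dots> = (\<Sum>a\<in>UNIV. (lam/4) * (Dv t a a)\<^sup>2) + (\<Sum>a\<in>UNIV. (4/lam) * \<delta>\<^sup>2 * (nk a * (x t $ a - xs $ a))\<^sup>2)"
  proof -
    have pt: "(\<delta> * nk a * (x t $ a - xs $ a))\<^sup>2 / (lam/4) = (4/lam) * \<delta>\<^sup>2 * (nk a * (x t $ a - xs $ a))\<^sup>2" for a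
      using lam_pos by (simp add: power_mult_distrib[symmetric] mult.assoc)
    show ?thesis by (simp only: pt sum.distrib)
  qed
  also have "\<dots> = (lam/4) * (\<Sum>a\<in>UNIV. (Dv t a a)\<^sup>2) + (4/lam) * \<delta>\<^sup>2 * (\<Sum>a\<in>UNIV. (nk a * (x t $ a - xs $ a))\<^sup>2)"
    by (simp only: sum_distrib_left)
  also have "\<dots> \<le> (lam/4) * U t + (4/lam) * \<delta>\<^sup>2 * (\<Sum>a\<in>UNIV. (nk a * (x t $ a - xs $ a))\<^sup>2)"
    using diag_le_U[of t] lam_pos by simp
  finally have V1: "Vd t \<le> - 2 * \<delta> * ((x t - xs) \<bullet> P (x t)) + (lam/4) * U t + (4/lam) * \<delta>\<^sup>2 * (\<Sum>a\<in>UNIV. (nk a * (x t $ a - xs $ a))\<^sup>2)"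
    unfolding Vd_eq[OF assms] by linarith
  have "(\<Sum>k\<in>UNIV. \<Sum>j\<in>nb k. 2 * Dv t j k * hd t j k) \<le> (\<Sum>k\<in>UNIV. \<Sum>j\<in>nb k. (lam/2) * (Dv t j k)\<^sup>2 + (hd t j k)\<^sup>2 / (lam/2))"
    by (intro sum_mono young[OF l2])
  also have "\<dots> = (\<Sum>k\<in>UNIV. \<Sum>j\<in>nb k. (lam/2) * (Dv t j k)\<^sup>2) + (\<Sum>k\<in>UNIV. \<Sum>j\<in>nb k. (2/lam) * (hd t j k)\<^sup>2)"
  proof -
    have pt: "h / (lam/2) = (2/lam) * h" for h using lam_pos by simp
    show ?thesis by (simp only: pt sum.distrib)
  qed
  also have "\<dots> = (lam/2) * U t + (2/lam) * (\<Sum>k\<in>UNIV. \<Sum>j\<in>nb k. (hd t j k)\<^sup>2)"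
    unfolding U_def by (simp only: sum_distrib_left)
  finally have U1: "Ud t \<le> - lam * U t + (lam/2) * U t + (2/lam) * (\<Sum>k\<in>UNIV. \<Sum>j\<in>nb k. (hd t j k)\<^sup>2)"
    using Ud_le[of t] by linarith
  show ?thesis using V1 U1 by linarith
qed


definition W where "W t = V t + U t"
definition Wd where "Wd t = Vd t + Ud t"

lemma Wder: "t \<in> {0..<T} \<Longrightarrow> (W has_real_derivative Wd t) (at t within {0..<T})"
  unfolding W_def[abs_def] Wd_def by (intro DERIV_add Vder Uder)

lemma V_Vw: "V t = OS.Vw (x t - xs)" unfolding V_def OS.Vw_def by simp

lemma W_nonneg: "0 \<le> W t" unfolding W_def V_Vw using OS.Vw_nonneg U_nonneg by (simp add: add_nonneg_nonneg)

lemma normsq_le: assumes "W t \<le> Rb" shows "(norm (x t - xs))\<^sup>2 \<le> Rb / OS.wmin"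
proof -
  have "OS.wmin * (norm (x t - xs))\<^sup>2 \<le> Rb" using OS.Vw_ge[of "x t - xs"] assms U_nonneg[of t]
    unfolding W_def V_Vw by linarith
  thus ?thesis using OS.wmin_pos by (simp add: field_simps)
qed

lemma in_cball: assumes "W t \<le> Rb" shows "x t \<in> cball xs (rho0 Rb)"
  using normsq_le[OF assms] unfolding rho0_def mem_cball dist_norm
  by (metis norm_minus_commute real_le_rsqrt)

lemma U_le: "W t \<le> Rb \<Longrightarrow> U t \<le> Rb" unfolding W_def V_Vw using OS.Vw_nonneg[of "x t - xs"] by linarith

end


context traj begin

lemma abs_le_sq: "\<bar>z::real\<bar> \<le> 1 + z\<^sup>2"
proof -
  have "0 \<le> (\<bar>z\<bar> - 1)\<^sup>2" by simp
  hence "2 * \<bar>z\<bar> \<le> 1 + z\<^sup>2" by (simp add: power2_eq_square algebra_simps abs_mult_self_eq)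
  thus ?thesis by linarith
qed

lemma Dv_sq_le: "(Dv t a a)\<^sup>2 \<le> U t"
  using diag_le_U[of t] member_le_sum[of a UNIV "\<lambda>a. (Dv t a a)\<^sup>2"] by simp

lemma g_bound: assumes t: "t \<in> {0..<T}" and Wb: "W t \<le> Rb"
  shows "\<bar>g t a a\<bar> \<le> 1 + Rb + Pm Rb"
proof -
  have "\<bar>Dv t a a\<bar> \<le> 1 + Rb" using abs_le_sq[of "Dv t a a"] Dv_sq_le[of t a] U_le[OF Wb] by linarith
  moreover have "\<bar>P (x t) $ a / nk a\<bar> \<le> Pm Rb"
  proof -
    have "\<bar>P (x t) $ a / nk a\<bar> \<le> \<bar>P (x t) $ a\<bar>" using nk_ge1[of a]
      by (simp add: abs_div divide_le_eq_1 mult_le_cancel_left1 divide_le_eq)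
    also have "\<dots> \<le> norm (P (x t))" by (rule component_le_norm_cart)
    also have "\<dots> \<le> Pm Rb" by (rule Pm(2)[OF in_cball[OF Wb]])
    finally show ?thesis .
  qed
  ultimately show ?thesis unfolding g_aa[OF t] by linarith
qed

lemma xd_bound: assumes t: "t \<in> {0..<T}" and Wb: "W t \<le> Rb"
  shows "norm (xd t) \<le> \<delta> * Kx Rb"
proof -
  have "norm (xd t) \<le> (\<Sum>a\<in>UNIV. \<bar>xd t $ a\<bar>)" by (rule norm_le_l1_cart)
  also have "\<dots> \<le> (\<Sum>a\<in>UNIV. \<delta> * (dbar a * (1 + Rb + Pm Rb)))"
  proof (rule sum_mono)
    fix a
    have "\<bar>xd t $ a\<bar> = \<delta> * dbar a * \<bar>g t a a\<bar>" unfolding xd_def using dpos dbar_pos[rule_format, of a]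
      by (simp add: abs_mult)
    also have "\<dots> \<le> \<delta> * dbar a * (1 + Rb + Pm Rb)"
      using g_bound[OF t Wb, of a] dpos dbar_pos by (intro mult_left_mono) (auto simp: less_imp_le)
    finally show "\<bar>xd t $ a\<bar> \<le> \<delta> * (dbar a * (1 + Rb + Pm Rb))" by simp
  qed
  also have "\<dots> = \<delta> * Kx Rb" unfolding Kx_def by (simp add: sum_distrib_left)
  finally show ?thesis .
qed

lemma hd_bound: assumes t: "t \<in> {0..<T}" and Wb: "W t \<le> Rb"
  shows "\<bar>hd t j k\<bar> \<le> Hm Rb * (\<delta> * Kx Rb)"
proof -
  have "\<bar>hd t j k\<bar> \<le> norm (blinfun_apply (D2f j (x t)) (xd t)) * norm (axis k (1::real) :: real^'a)"
    unfolding hd_def using norm_blinfun[of "blinfun_apply (D2f j (x t)) (xd t)" "axis k 1"] by simp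
  also have "\<dots> = norm (blinfun_apply (D2f j (x t)) (xd t))" by simp
  also have "\<dots> \<le> norm (D2f j (x t)) * norm (xd t)" by (rule norm_blinfun)
  also have "\<dots> \<le> Hm Rb * (\<delta> * Kx Rb)"
    using Hm(2)[OF in_cball[OF Wb], of j] xd_bound[OF t Wb] Hm(1) by (intro mult_mono) auto
  finally show ?thesis .
qed

lemma card_nb: "real (card (nb k)) \<le> Nc" unfolding Nc_def by (simp add: card_mono)

lemma hd_sum: assumes t: "t \<in> {0..<T}" and Wb: "W t \<le> Rb"
  shows "(\<Sum>k\<in>UNIV. \<Sum>j\<in>nb k. (hd t j k)\<^sup>2) \<le> Nc\<^sup>2 * (Hm Rb * (\<delta> * Kx Rb))\<^sup>2"
proof -
  define B where "B = (Hm Rb * (\<delta> * Kx Rb))\<^sup>2"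
  have "(\<Sum>k\<in>UNIV. \<Sum>j\<in>nb k. (hd t j k)\<^sup>2) \<le> (\<Sum>k\<in>UNIV. \<Sum>j\<in>nb k. B)"
    unfolding B_def using hd_bound[OF t Wb]
    by (intro sum_mono) (metis abs_ge_zero power_mono power2_abs)
  also have "\<dots> = (\<Sum>k\<in>UNIV. real (card (nb k)) * B)" by simp
  also have "\<dots> \<le> (\<Sum>k\<in>(UNIV::'a set). Nc * B)"
    by (rule sum_mono, rule mult_right_mono[OF card_nb]) (simp add: B_def)
  also have "\<dots> = Nc\<^sup>2 * B" unfolding Nc_def by (simp add: power2_eq_square)
  finally show ?thesis unfolding B_def .
qed

lemma e_sum: assumes Wb: "W t \<le> Rb"
  shows "(\<Sum>a\<in>UNIV. (nk a * (x t $ a - xs $ a))\<^sup>2) \<le> Nc\<^sup>2 * (Rb / OS.wmin)"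
proof -
  have "(\<Sum>a\<in>UNIV. (nk a * (x t $ a - xs $ a))\<^sup>2) \<le> (\<Sum>a\<in>UNIV. Nc\<^sup>2 * ((x t - xs) $ a)\<^sup>2)"
  proof (rule sum_mono)
    fix a
    have "(nk a)\<^sup>2 \<le> Nc\<^sup>2" using nk_le[of a] nk_pos[of a] unfolding Nc_def by (intro power_mono) auto
    thus "(nk a * (x t $ a - xs $ a))\<^sup>2 \<le> Nc\<^sup>2 * ((x t - xs) $ a)\<^sup>2"
      by (simp add: power_mult_distrib mult_right_mono)
  qed
  also have "\<dots> = Nc\<^sup>2 * (norm (x t - xs))\<^sup>2" unfolding OS.norm_sq by (simp add: sum_distrib_left)
  also have "\<dots> \<le> Nc\<^sup>2 * (Rb / OS.wmin)" using normsq_le[OF Wb] by (intro mult_left_mono) auto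
  finally show ?thesis .
qed

lemma Wd_bound: assumes t: "t \<in> {0..<T}" and Wb: "W t \<le> Rb"
  shows "Wd t \<le> - \<delta> * OS.om (x t - xs) (U t) + \<delta>\<^sup>2 * K3 Rb"
proof -
  have a: "(4/lam) * \<delta>\<^sup>2 * (\<Sum>a\<in>UNIV. (nk a * (x t $ a - xs $ a))\<^sup>2) \<le> (4/lam) * \<delta>\<^sup>2 * (Nc\<^sup>2 * (Rb / OS.wmin))"
    using e_sum[OF Wb] lam_pos by (intro mult_left_mono) auto
  have b: "(2/lam) * (\<Sum>k\<in>UNIV. \<Sum>j\<in>nb k. (hd t j k)\<^sup>2) \<le> (2/lam) * (Nc\<^sup>2 * (Hm Rb * (\<delta> * Kx Rb))\<^sup>2)"
    using hd_sum[OF t Wb] lam_pos by (intro mult_left_mono) auto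
  have c: "- (lam/4) * U t \<le> - \<delta> * ((lam/4) * U t)"
    using dle U_nonneg[of t] lam_pos mult_left_le_one_le[of "U t" \<delta>] dpos by simp
  have K: "(4/lam) * \<delta>\<^sup>2 * (Nc\<^sup>2 * (Rb / OS.wmin)) + (2/lam) * (Nc\<^sup>2 * (Hm Rb * (\<delta> * Kx Rb))\<^sup>2) = \<delta>\<^sup>2 * K3 Rb"
    unfolding K3_def by (simp add: power_mult_distrib algebra_simps)
  have om: "OS.om (x t - xs) (U t) = 2 * ((x t - xs) \<bullet> P (x t)) + (lam/4) * U t"
    unfolding OS.om_def by simp
  show ?thesis using Wd_raw[OF t] a b c K unfolding Wd_def om by (simp add: algebra_simps)
qed

end


context game begin
definition wmax :: real where "wmax = Max (range wt)"
lemma wmax_ge: "wt a \<le> wmax" unfolding wmax_def by auto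
definition c0 :: real where "c0 = min OS.wmin 1"
definition c1 :: real where "c1 = max wmax 1"
lemma c0_pos: "c0 > 0" unfolding c0_def using OS.wmin_pos by simp
lemma c1_pos: "c1 > 0" unfolding c1_def by simp

lemma Vw_le: "OS.Vw e \<le> wmax * (norm e)\<^sup>2"
  unfolding OS.norm_sq OS.Vw_def sum_distrib_left
  by (intro sum_mono mult_right_mono wmax_ge) auto
end

context traj begin

lemma chi_sq: assumes t: "t \<in> {0..<T}"
  shows "chi_norm f c R j0 xs (w t) (x t) = sqrt (U t + (norm (x t - xs))\<^sup>2)"
proof -
  have inner: "(\<Sum>p<card (nb k) - 1. (Gbar f c R (w t) (x t) k p)\<^sup>2) = (\<Sum>j\<in>nb k. (Dv t j k)\<^sup>2)" for k
  proof -
    have Rk: "\<forall>p < card (nb k) - 1. (\<Sum>j\<in>nb k. R k j p) = 0 \<and>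
      (\<forall>q < card (nb k) - 1. (\<Sum>j\<in>nb k. R k j p * R k j q) = (if p = q then 1 else 0))"
      using Rv unfolding valid_R_def by blast
    have G: "Gbar f c R (w t) (x t) k p = (\<Sum>j\<in>nb k. R k j p * Dv t j k)" if p: "p < card (nb k) - 1" for p
    proof -
      define M where "M = (\<Sum>l\<in>nb k. g t l k) / nk k"
      have "(\<Sum>j\<in>nb k. R k j p * Dv t j k) = (\<Sum>j\<in>nb k. R k j p * g t j k) - M * (\<Sum>j\<in>nb k. R k j p)"
        unfolding Dv_def M_def[symmetric] by (simp add: algebra_simps sum_subtractf sum_distrib_left)
      also have "(\<Sum>j\<in>nb k. R k j p) = 0" using Rk p by blast
      finally show ?thesis unfolding Gbar_def g_def by simp
    qed
    have "(\<Sum>p<card (nb k) - 1. (Gbar f c R (w t) (x t) k p)\<^sup>2) = (\<Sum>p<card (nb k) - 1. (\<Sum>j\<in>nb k. R k j p * Dv t j k)\<^sup>2)"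
      using G by simp
    also have "\<dots> = (\<Sum>j\<in>nb k. (Dv t j k)\<^sup>2)"
      by (rule parseval[where r="\<lambda>p j. R k j p"]) (use Rk sumDv nb_ne in auto)
    finally show ?thesis .
  qed
  have "(\<Sum>k\<in>{k. c k \<noteq> j0}. \<Sum>p<card (nb k) - 1. (Gbar f c R (w t) (x t) k p)\<^sup>2) = (\<Sum>k\<in>{k. c k \<noteq> j0}. \<Sum>j\<in>nb k. (Dv t j k)\<^sup>2)"
    using inner by simp
  also have "\<dots> = U t" unfolding U_def
  proof (rule sum.mono_neutral_left)
    show "\<forall>k\<in>UNIV - {k. c k \<noteq> j0}. (\<Sum>j\<in>nb k. (Dv t j k)\<^sup>2) = 0"
      using nb_j0 Dv_j0 by auto
  qed auto
  finally show ?thesis unfolding chi_norm_def by simp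
qed

lemma chi_le: assumes t: "t \<in> {0..<T}"
  shows "(chi_norm f c R j0 xs (w t) (x t))\<^sup>2 \<le> W t / c0"
    and "W t \<le> c1 * (chi_norm f c R j0 xs (w t) (x t))\<^sup>2"
proof -
  have nn: "0 \<le> U t + (norm (x t - xs))\<^sup>2" using U_nonneg[of t] by simp
  have sq: "(chi_norm f c R j0 xs (w t) (x t))\<^sup>2 = U t + (norm (x t - xs))\<^sup>2"
    unfolding chi_sq[OF t] using nn by simp
  have "c0 * (U t + (norm (x t - xs))\<^sup>2) \<le> W t"
  proof -
    have "c0 * U t \<le> U t" using U_nonneg[of t] mult_left_le_one_le[of "U t" c0] c0_pos unfolding c0_def by simp
    moreover have "c0 * (norm (x t - xs))\<^sup>2 \<le> V t"
      using OS.Vw_ge[of "x t - xs"] unfolding V_Vw c0_def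
      by (meson min.cobounded1 mult_right_mono order_trans zero_le_power2)
    ultimately show ?thesis unfolding W_def by (simp add: algebra_simps)
  qed
  thus "(chi_norm f c R j0 xs (w t) (x t))\<^sup>2 \<le> W t / c0" unfolding sq using c0_pos by (simp add: field_simps)
  have "V t \<le> c1 * (norm (x t - xs))\<^sup>2"
    using Vw_le[of "x t - xs"] unfolding V_Vw c1_def
    by (meson max.cobounded1 mult_right_mono order_trans zero_le_power2)
  moreover have "U t \<le> c1 * U t" using U_nonneg[of t] unfolding c1_def
    by (simp add: mult_le_cancel_right1)
  ultimately show "W t \<le> c1 * (chi_norm f c R j0 xs (w t) (x t))\<^sup>2"
    unfolding sq W_def by (simp add: algebra_simps)
qed

end


context game begin

lemma K3_nonneg: "Rb \<ge> 0 \<Longrightarrow> K3 Rb \<ge> 0"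
  unfolding K3_def using lam_pos OS.wmin_pos by (intro add_nonneg_nonneg mult_nonneg_nonneg divide_nonneg_pos) auto

theorem main:
  "\<exists>\<phi>. class_KL \<phi> \<and>
    (\<forall>\<Delta>>0. \<forall>v>0. \<exists>\<delta>s>0. \<forall>\<delta>. 0 < \<delta> \<and> \<delta> < \<delta>s \<longrightarrow>
       (\<forall>T>0. \<forall>x w. seeking_solution f c A (\<lambda>a. \<delta> * dbar a) T x w \<and>
           chi_norm f c R j0 xs (w 0) (x 0) < \<Delta> \<longrightarrow>
           (\<forall>t\<in>{0..<T}. chi_norm f c R j0 xs (w t) (x t)
              \<le> \<phi> (chi_norm f c R j0 xs (w 0) (x 0)) (\<delta> * t) + v)))"
proof -
  interpret AF: alpha_fun OS.alph by (rule OS.alpha_fun)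
  have KL: "class_KL (AF.KLfun c0 c1)" by (rule AF.KLfun[OF c0_pos c1_pos])
  have "\<forall>\<Delta>>0. \<forall>v>0. \<exists>\<delta>s>0. \<forall>\<delta>. 0 < \<delta> \<and> \<delta> < \<delta>s \<longrightarrow>
       (\<forall>T>0. \<forall>x w. seeking_solution f c A (\<lambda>a. \<delta> * dbar a) T x w \<and>
           chi_norm f c R j0 xs (w 0) (x 0) < \<Delta> \<longrightarrow>
           (\<forall>t\<in>{0..<T}. chi_norm f c R j0 xs (w t) (x t)
              \<le> AF.KLfun c0 c1 (chi_norm f c R j0 xs (w 0) (x 0)) (\<delta> * t) + v))"
  proof (intro allI impI)
    fix \<Delta> v :: real assume Dp: "\<Delta> > 0" and vp: "v > 0"
    define Rb where "Rb = c1 * \<Delta>\<^sup>2 + 1"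
    define \<eta> where "\<eta> = min (c0 * v\<^sup>2) (Rb / 2)"
    have Rbp: "Rb > 0" unfolding Rb_def using c1_pos by (simp add: add_nonneg_pos)
    have etap: "\<eta> > 0" unfolding \<eta>_def using c0_pos vp Rbp by simp
    have etaR: "\<eta> < Rb" unfolding \<eta>_def using Rbp by simp
    obtain \<rho>m where \<rho>m: "\<rho>m \<in> {\<eta>..Rb}" "\<And>\<rho>. \<rho> \<in> {\<eta>..Rb} \<Longrightarrow> OS.alph \<rho>m \<le> OS.alph \<rho>"
      using continuous_attains_inf[of "{\<eta>..Rb}" OS.alph] etaR
        continuous_on_subset[OF OS.alph_cont, of "{\<eta>..Rb}"] by auto
    define m where "m = OS.alph \<rho>m"
    have mp: "m > 0" unfolding m_def using \<rho>m(1) etap by (intro OS.alph_pos) auto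
    have K3n: "K3 Rb \<ge> 0" using K3_nonneg Rbp by simp
    define \<delta>s where "\<delta>s = min 1 (m / (2 * K3 Rb + 1))"
    have dsp: "\<delta>s > 0" unfolding \<delta>s_def using mp K3n by simp
    show "\<exists>\<delta>s>0. \<forall>\<delta>. 0 < \<delta> \<and> \<delta> < \<delta>s \<longrightarrow>
       (\<forall>T>0. \<forall>x w. seeking_solution f c A (\<lambda>a. \<delta> * dbar a) T x w \<and>
           chi_norm f c R j0 xs (w 0) (x 0) < \<Delta> \<longrightarrow>
           (\<forall>t\<in>{0..<T}. chi_norm f c R j0 xs (w t) (x t)
              \<le> AF.KLfun c0 c1 (chi_norm f c R j0 xs (w 0) (x 0)) (\<delta> * t) + v))"
    proof (intro exI[of _ \<delta>s] conjI dsp allI impI ballI)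
      fix \<delta> T x w t
      assume \<delta>: "0 < \<delta> \<and> \<delta> < \<delta>s" and Tp: "T > 0"
        and H: "seeking_solution f c A (\<lambda>a. \<delta> * dbar a) T x w \<and> chi_norm f c R j0 xs (w 0) (x 0) < \<Delta>"
        and t: "t \<in> {0..<T}"
      have dle: "\<delta> \<le> 1" using \<delta> unfolding \<delta>s_def by simp
      interpret tr: traj N j0 c f A dbar xs R Df D2f \<delta> T x w
        by unfold_locales (use H \<delta> dle in auto)
      define \<chi>0 where "\<chi>0 = chi_norm f c R j0 xs (w 0) (x 0)"
      have t0: "0 \<in> {0..<T}" using Tp by simp
      have chi_nn: "0 \<le> chi_norm f c R j0 xs (w s) (x s)" if "s \<in> {0..<T}" for s
        unfolding tr.chi_sq[OF that] using tr.U_nonneg[of s] by simp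
      have W0: "tr.W 0 \<le> c1 * \<chi>0\<^sup>2" unfolding \<chi>0_def by (rule tr.chi_le(2)[OF t0])
      have "\<chi>0\<^sup>2 < \<Delta>\<^sup>2" using H chi_nn[OF t0] unfolding \<chi>0_def by (simp add: power_strict_mono)
      hence "c1 * \<chi>0\<^sup>2 < c1 * \<Delta>\<^sup>2" using c1_pos by simp
      hence W0R: "tr.W 0 < Rb" using W0 unfolding Rb_def by linarith
      have dK: "\<delta> * K3 Rb \<le> m / 2"
      proof -
        have "\<delta> < m / (2 * K3 Rb + 1)" using \<delta> unfolding \<delta>s_def by simp
        hence "\<delta> * (2 * K3 Rb + 1) < m" using K3n by (simp add: field_simps)
        thus ?thesis using \<delta> by (simp add: algebra_simps)
      qed
      have dec: "tr.Wd s \<le> - (\<delta>/2) * OS.alph (tr.W s)"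
        if s: "s \<in> {0..<T}" "\<eta> \<le> tr.W s" "tr.W s \<le> Rb" for s
      proof -
        have "OS.alph (tr.W s) \<le> OS.om (x s - xs) (tr.U s)"
          unfolding tr.W_def tr.V_Vw by (rule OS.alph_le[OF tr.U_nonneg])
        hence "\<delta> * OS.alph (tr.W s) \<le> \<delta> * OS.om (x s - xs) (tr.U s)"
          using \<delta> by (simp add: mult_left_mono)
        hence "tr.Wd s \<le> - \<delta> * OS.alph (tr.W s) + \<delta>\<^sup>2 * K3 Rb"
          using tr.Wd_bound[OF s(1) s(3)] by linarith
        moreover have "m \<le> OS.alph (tr.W s)" unfolding m_def using \<rho>m(2) s by auto
        moreover have "\<delta>\<^sup>2 * K3 Rb = \<delta> * (\<delta> * K3 Rb)" by (simp add: power2_eq_square)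
        moreover have "\<delta> * (\<delta> * K3 Rb) \<le> \<delta> * (m/2)" using dK \<delta> by (simp add: mult_left_mono)
        moreover have "\<delta> * (m/2) \<le> \<delta> * (OS.alph (tr.W s) / 2)"
          using calculation(2) \<delta> by (simp add: mult_left_mono)
        ultimately show ?thesis by linarith
      qed
      have cmp: "tr.W t \<le> max \<eta> (AF.Hinv (AF.H (tr.W 0) * exp (- (\<delta>/2) * t)))"
        by (rule AF.comparison[where y'=tr.Wd and Rb=Rb])
           (use tr.Wder dec etap etaR tr.W_nonneg W0R \<delta> t in auto)
      define B where "B = AF.Hinv (AF.H (c1 * \<chi>0\<^sup>2) * exp (- (\<delta> * t) / 2))"
      have Bnn: "0 \<le> B" unfolding B_def by (intro AF.Hinv_nonneg mult_nonneg_nonneg AF.H_nonneg) auto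
      have "AF.Hinv (AF.H (tr.W 0) * exp (- (\<delta>/2) * t)) \<le> B"
      proof -
        have "AF.H (tr.W 0) \<le> AF.H (c1 * \<chi>0\<^sup>2)" using W0 tr.W_nonneg by (intro AF.H_mono) auto
        hence "AF.H (tr.W 0) * exp (- (\<delta>/2) * t) \<le> AF.H (c1 * \<chi>0\<^sup>2) * exp (- (\<delta> * t) / 2)"
          by (simp add: mult_right_mono)
        thus ?thesis unfolding B_def by (intro AF.Hinv_mono mult_nonneg_nonneg AF.H_nonneg) auto
      qed
      hence Wt: "tr.W t \<le> \<eta> + B" using cmp etap Bnn by linarith
      have "(chi_norm f c R j0 xs (w t) (x t))\<^sup>2 \<le> tr.W t / c0" by (rule tr.chi_le(1)[OF t])
      also have "\<dots> \<le> (\<eta> + B) / c0" using Wt c0_pos by (simp add: divide_right_mono)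
      also have "\<dots> = B / c0 + \<eta> / c0" by (simp add: add_divide_distrib)
      finally have sq: "(chi_norm f c R j0 xs (w t) (x t))\<^sup>2 \<le> B / c0 + \<eta> / c0" .
      have "chi_norm f c R j0 xs (w t) (x t) = sqrt ((chi_norm f c R j0 xs (w t) (x t))\<^sup>2)"
        using chi_nn[OF t] by simp
      also have "\<dots> \<le> sqrt (B / c0 + \<eta> / c0)" using sq by (rule real_sqrt_le_mono)
      also have "\<dots> \<le> sqrt (B / c0) + sqrt (\<eta> / c0)"
        using Bnn etap c0_pos by (intro sqrt_add_le_add_sqrt) auto
      also have "sqrt (\<eta> / c0) \<le> v"
      proof -
        have "\<eta> / c0 \<le> v\<^sup>2" unfolding \<eta>_def using c0_pos by (simp add: field_simps)
        thus ?thesis using vp by (metis real_sqrt_le_mono real_sqrt_abs abs_of_pos)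
      qed
      also have "sqrt (B / c0) = AF.KLfun c0 c1 \<chi>0 (\<delta> * t)" unfolding B_def AF.KLfun_def by simp
      finally show "chi_norm f c R j0 xs (w t) (x t) \<le> AF.KLfun c0 c1 (chi_norm f c R j0 xs (w 0) (x 0)) (\<delta> * t) + v"
        unfolding \<chi>0_def by simp
    qed
  qed
  thus ?thesis using KL by blast
qed

end

theorem corollary1:
  fixes N :: nat and j0 :: nat and c :: "'a::finite \<Rightarrow> nat"
    and f :: "'a \<Rightarrow> real^'a \<Rightarrow> real" and A :: "'a \<Rightarrow> 'a \<Rightarrow> real"
    and dbar :: "'a \<Rightarrow> real" and xs :: "real^'a" and R :: "'a \<Rightarrow> 'a \<Rightarrow> nat \<Rightarrow> real"
  assumes N2: "N \<ge> 2"
    and coal: "\<forall>a. c a < N" and nonempty: "\<forall>i<N. \<exists>a. c a = i"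
    and j0: "j0 < N" and mj0: "card {a. c a = j0} = 1"
    and mi: "\<forall>i<N. i \<noteq> j0 \<longrightarrow> card {a. c a = i} \<ge> 2"
    and A1: "\<forall>a. C2_fun (f a)"
    and A2: "\<forall>x y. x \<noteq> y \<longrightarrow> (x - y) \<bullet> (pseudo_gradient f c x - pseudo_gradient f c y) > 0"
    and NE: "is_NE N f c xs"
    and A_sym: "\<forall>a b. A a b = A b a" and A_nonneg: "\<forall>a b. A a b \<ge> 0" and A_diag: "\<forall>a. A a a = 0"
    and GI_conn: "\<forall>i<N. i \<noteq> j0 \<longrightarrow> graph_connected {a. c a = i} (interf f c)"
    and GC_conn: "\<forall>k. c k \<noteq> j0 \<longrightarrow> graph_connected (nbhd f c k) (\<lambda>u v. A u v > 0)"
    and dbar_pos: "\<forall>a. dbar a > 0"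
    and R: "valid_R f c R"
  shows "\<exists>\<phi>. class_KL \<phi> \<and>
    (\<forall>\<Delta>>0. \<forall>v>0. \<exists>\<delta>s>0. \<forall>\<delta>. 0 < \<delta> \<and> \<delta> < \<delta>s \<longrightarrow>
       (\<forall>T>0. \<forall>x w. seeking_solution f c A (\<lambda>a. \<delta> * dbar a) T x w \<and>
           chi_norm f c R j0 xs (w 0) (x 0) < \<Delta> \<longrightarrow>
           (\<forall>t\<in>{0..<T}. chi_norm f c R j0 xs (w t) (x t)
              \<le> \<phi> (chi_norm f c R j0 xs (w 0) (x 0)) (\<delta> * t) + v)))"
proof -
  have "\<forall>a. \<exists>p. (\<forall>x. (f a has_derivative blinfun_apply (fst p x)) (at x)) \<and>
      (\<forall>x. (fst p has_derivative blinfun_apply (snd p x)) (at x)) \<and> continuous_on UNIV (snd p)"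
  proof
    fix a
    obtain Dg D2g where "(\<forall>x. (f a has_derivative blinfun_apply (Dg x)) (at x))"
      "(\<forall>x. (Dg has_derivative blinfun_apply (D2g x)) (at x))" "continuous_on UNIV D2g"
      using A1 unfolding C2_fun_def by blast
    thus "\<exists>p. (\<forall>x. (f a has_derivative blinfun_apply (fst p x)) (at x)) \<and>
      (\<forall>x. (fst p has_derivative blinfun_apply (snd p x)) (at x)) \<and> continuous_on UNIV (snd p)"
      by (intro exI[of _ "(Dg, D2g)"]) simp
  qed
  hence "\<exists>F. \<forall>a. (\<forall>x. (f a has_derivative blinfun_apply (fst (F a) x)) (at x)) \<and>
      (\<forall>x. (fst (F a) has_derivative blinfun_apply (snd (F a) x)) (at x)) \<and> continuous_on UNIV (snd (F a))"
    by (rule choice)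
  then obtain F where F: "\<forall>a. (\<forall>x. (f a has_derivative blinfun_apply (fst (F a) x)) (at x)) \<and>
      (\<forall>x. (fst (F a) has_derivative blinfun_apply (snd (F a) x)) (at x)) \<and> continuous_on UNIV (snd (F a))"
    by blast
  interpret G: game N j0 c f A dbar xs R "\<lambda>a. fst (F a)" "\<lambda>a. snd (F a)"
    by unfold_locales (use F coal mj0 A2 NE A_sym A_nonneg GC_conn dbar_pos R in auto)
  show ?thesis by (rule G.main)
qed

end
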